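(* Let $\omega\in\Omega$ with $\beta_1<1$, $E=E^\omega$, let $N\ge1$, $a\in\{\pm\frac12\}$, and let $(n_1,a_1)$ be a level with $2n_1+a_1\le2N+a$. Then for $1\le l\le n_1$, \[\Psi^{n_1,a_1}_{n_1-l}(s)=\frac{W^{(a_1,-1/2)}(s)}{\pi}\int_{-1}^1E(x)\mathsf{J}^{(a_1,-1/2)}_s(x)(x-1)^{n_1-l}(1-x)^{a_1}(1+x)^{-1/2}dx,\] and for $n_1<l\le N$, \[\Psi^{n_1,a_1}_{n_1-l}(s)=\frac{W^{(a_1,-1/2)}(s)}{\pi}\int_{-1}^1\frac{E(x)-\sum_{j=0}^{l-n_1-1}\frac{E^{(j)}(1)}{j!}(x-1)^j}{(x-1)^{l-n_1}}\,\mathsf{J}^{(a_1,-1/2)}_s(x)(1-x)^{a_1}(1+x)^{-1/2}dx .\]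
   Context: $\mathsf{J}^{(-1/2,-1/2)}_s(\cos\theta)=\cos s\theta$, $\mathsf{J}^{(1/2,-1/2)}_s(\cos\theta)=\sin((s+\frac12)\theta)/\sin(\theta/2)$; $W^{(-1/2,-1/2)}(0)=1$, $W^{(-1/2,-1/2)}(s)=2$ ($s>0$), $W^{(1/2,-1/2)}\equiv1$. $\Omega$: triples $(\alpha,\beta,\delta)$, $\alpha_1\ge\alpha_2\ge\dots\ge0$, $\beta_1\ge\beta_2\ge\dots\ge0$, $\sum(\alpha_i+\beta_i)\le\delta$, $\gamma=\delta-\sum(\alpha_i+\beta_i)$, $E^\omega(x)=e^{\gamma(x-1)}\prod_i\frac{1-\beta_i(1-x)+\beta_i^2(1-x)/2}{1+\alpha_i(1-x)+\alpha_i^2(1-x)/2}$. Levels $(n,b)$, $n\ge1$, $b\in\{\pm\frac12\}$, ordered by $2n+b$. Matrices on $\mathbb{Z}_{\ge0}\times\mathbb{Z}_{\ge0}$: $\mathcal{T}(x,y)=0$ if $x<y$, $1$ if $x\ge y=0$, $2$ if $x\ge y>0$; $\phi(x,y)=\mathbf 1[x>y]$; product $(f*g)(x,y)=\sum_{z\ge0}f(x,z)g(z,y)$. For $2n_1+b_1<2n_2+b_2$: $\phi^{(n_1,b_1),(n_2,b_2)}=(\mathcal{T}*\phi)^{n_2-n_1}*\mathcal{T}$ if $(b_1,b_2)=(-\frac12,\frac12)$; $(\mathcal{T}*\phi)^{n_2-n_1}$ if $(\frac12,\frac12)$; $(\phi*\mathcal{T})^{n_2-n_1-1}*\phi$ if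 $(\frac12,-\frac12)$; $(\phi*\mathcal{T})^{n_2-n_1}$ if $(-\frac12,-\frac12)$. Functions: $\Psi^{N,a}_{N-l}(s)=\frac{W^{(a,-1/2)}(s)}\pi\int_{-1}^1E(x)\mathsf{J}^{(a,-1/2)}_s(x)(x-1)^{N-l}(1-x)^a(1+x)^{-1/2}dx$ for $1\le l\le N$, $s\ge0$; for a level $(n,b)$ with $2n+b<2N+a$ and $1\le l\le N$, $\Psi^{n,b}_{n-l}(s)=\sum_{z\ge0}\Psi^{N,a}_{N-l}(z)\,\phi^{(n,b),(N,a)}(z,s)$; for $(n,b)=(N,a)$ it is $\Psi^{N,a}_{N-l}$ itself. *)

theory Defs
  imports "HOL-Analysis.Analysis"
begin

definition Jac :: "real \<Rightarrow> nat \<Rightarrow> real \<Rightarrow> real" where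
  "Jac a s x =
     (if a = -1/2 then cos (real s * arccos x)
      else (if arccos x = 0 then 2 * real s + 1
            else sin ((real s + 1/2) * arccos x) / sin (arccos x / 2)))"

definition Wt :: "real \<Rightarrow> nat \<Rightarrow> real" where
  "Wt a s = (if a = -1/2 then (if s = 0 then 1 else 2) else 1)"

text \<open>Sequences alpha_1 \<ge> alpha_2 \<ge> ... are indexed from 0 here (alpha 0 = alpha_1).\<close>
definition in_Omega :: "(nat \<Rightarrow> real) \<Rightarrow> (nat \<Rightarrow> real) \<Rightarrow> real \<Rightarrow> bool" where
  "in_Omega \<alpha> \<beta> \<delta> \<longleftrightarrow>
     (\<forall>i. \<alpha> (Suc i) \<le> \<alpha> i) \<and> (\<forall>i. 0 \<le> \<alpha> i) \<and>
     (\<forall>i. \<beta> (Suc i) \<le> \<beta> i) \<and> (\<forall>i. 0 \<le> \<beta> i) \<and>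
     summable (\<lambda>i. \<alpha> i + \<beta> i) \<and> (\<Sum>i. \<alpha> i + \<beta> i) \<le> \<delta>"

definition Eomega :: "(nat \<Rightarrow> real) \<Rightarrow> (nat \<Rightarrow> real) \<Rightarrow> real \<Rightarrow> real \<Rightarrow> real" where
  "Eomega \<alpha> \<beta> \<delta> x =
     (let \<gamma> = \<delta> - (\<Sum>i. \<alpha> i + \<beta> i) in
      exp (\<gamma> * (x - 1)) *
      (\<Prod>i. (1 - \<beta> i * (1 - x) + (\<beta> i)\<^sup>2 * (1 - x) / 2)
             / (1 + \<alpha> i * (1 - x) + (\<alpha> i)\<^sup>2 * (1 - x) / 2)))"

definition Tm :: "nat \<Rightarrow> nat \<Rightarrow> real" where
  "Tm x y = (if x < y then 0 else if y = 0 then 1 else 2)"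

definition phim :: "nat \<Rightarrow> nat \<Rightarrow> real" where
  "phim x y = (if x > y then 1 else 0)"

definition mmul :: "(nat \<Rightarrow> nat \<Rightarrow> real) \<Rightarrow> (nat \<Rightarrow> nat \<Rightarrow> real) \<Rightarrow> nat \<Rightarrow> nat \<Rightarrow> real" where
  "mmul f g x y = (\<Sum>z. f x z * g z y)"

definition mid :: "nat \<Rightarrow> nat \<Rightarrow> real" where
  "mid x y = (if x = y then 1 else 0)"

fun mpow :: "(nat \<Rightarrow> nat \<Rightarrow> real) \<Rightarrow> nat \<Rightarrow> nat \<Rightarrow> nat \<Rightarrow> real" where
  "mpow f 0 = mid"
| "mpow f (Suc k) = mmul (mpow f k) f"

text \<open>Levels (n,b) with n \<ge> 1, b \<in> {1/2,-1/2}; ordered by 2n+b.\<close>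
definition is_level :: "nat \<Rightarrow> real \<Rightarrow> bool" where
  "is_level n b \<longleftrightarrow> n \<ge> 1 \<and> (b = 1/2 \<or> b = -1/2)"

definition phiLev :: "nat \<Rightarrow> real \<Rightarrow> nat \<Rightarrow> real \<Rightarrow> nat \<Rightarrow> nat \<Rightarrow> real" where
  "phiLev n1 b1 n2 b2 =
     (if b1 = -1/2 \<and> b2 = 1/2 then mmul (mpow (mmul Tm phim) (n2 - n1)) Tm
      else if b1 = 1/2 \<and> b2 = 1/2 then mpow (mmul Tm phim) (n2 - n1)
      else if b1 = 1/2 \<and> b2 = -1/2 then mmul (mpow (mmul phim Tm) (n2 - n1 - 1)) phim
      else mpow (mmul phim Tm) (n2 - n1))"

text \<open>PsiTop E N a l s = Psi^{N,a}_{N-l}(s).\<close>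
definition PsiTop :: "(real \<Rightarrow> real) \<Rightarrow> nat \<Rightarrow> real \<Rightarrow> nat \<Rightarrow> nat \<Rightarrow> real" where
  "PsiTop E N a l s = Wt a s / pi *
     integral {-1..1} (\<lambda>x. E x * Jac a s x * (x - 1) ^ (N - l)
                             * (1 - x) powr a * (1 + x) powr (-1/2))"

text \<open>Psi E N a n b l s = Psi^{n,b}_{n-l}(s) (defined via the top level (N,a)).\<close>
definition Psi :: "(real \<Rightarrow> real) \<Rightarrow> nat \<Rightarrow> real \<Rightarrow> nat \<Rightarrow> real \<Rightarrow> nat \<Rightarrow> nat \<Rightarrow> real" where
  "Psi E N a n b l s =
     (if n = N \<and> b = a then PsiTop E N a l s
      else (\<Sum>z. PsiTop E N a l z * phiLev n b N a z s))"

end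

theory Submission
  imports Defs "HOL-Complex_Analysis.Complex_Analysis"
begin

lemma periodic_H:
  fixes G :: "complex \<Rightarrow> complex" and s :: nat
  shows "G (cos (w + 2 * of_real pi)) * exp (\<i> * of_nat s * (w + 2 * of_real pi))
       = G (cos w) * exp (\<i> * of_nat s * w)"
proof -
  have "cos (w + 2 * of_real pi) = cos w"
    by (simp add: cos_add)
  moreover have "exp (\<i> * of_nat s * (w + 2 * of_real pi)) = exp (\<i> * of_nat s * w + 2 * of_real pi * \<i> * of_nat s)"
    by (simp add: algebra_simps)
  moreover have "\<dots> = exp (\<i> * of_nat s * w) * exp (2 * of_real pi * \<i> * of_nat s)"
    by (rule exp_add)
  moreover have "exp (2 * of_real pi * \<i> * of_nat s) = 1"
    by (metis exp_of_nat_mult exp_two_pi_i mult.commute power_one)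
  ultimately show ?thesis by simp
qed

lemma contour_decay:
  fixes G :: "complex \<Rightarrow> complex"
  assumes holG: "G holomorphic_on U" and U: "open U" and sub: "of_real ` {-1..1} \<subseteq> U"
  obtains M \<eta> where "\<eta> > 0" "\<And>s::nat. ((\<lambda>t. G (of_real (cos t)) * exp (\<i> * of_nat s * of_real t)) has_integral
          (integral {-pi..pi} (\<lambda>t. G (of_real (cos t)) * exp (\<i> * of_nat s * of_real t)))) {-pi..pi}
          \<and> norm (integral {-pi..pi} (\<lambda>t. G (of_real (cos t)) * exp (\<i> * of_nat s * of_real t))) \<le> M * exp (- \<eta>) ^ s"
proof -
  define A where "A = {w. cos w \<in> U}"
  have oA: "open A"
  proof -
    have "open (cos -` U)" by (rule open_vimage[OF U]) (auto intro: continuous_intros)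
    thus ?thesis by (simp add: A_def vimage_def)
  qed
  have KA: "(of_real ` {-4..4}) \<subseteq> A"
  proof
    fix w assume "w \<in> (of_real ` {-4..4} :: complex set)"
    then obtain t where "w = of_real t" by auto
    then have "cos w = of_real (cos t)" by (simp add: cos_of_real)
    moreover have "cos t \<in> {-1..1}" by auto
    ultimately show "w \<in> A" using sub unfolding A_def by auto
  qed
  have cK: "compact (of_real ` {-4..4} :: complex set)"
    by (intro compact_continuous_image continuous_intros) auto
  obtain \<epsilon> where \<epsilon>: "\<epsilon> > 0" "(\<Union>x\<in>of_real ` {-4..4}. ball x \<epsilon>) \<subseteq> A"
    using compact_subset_open_imp_ball_epsilon_subset[OF cK oA KA] by blast
  define S where "S = {w. Re w < 4} \<inter> {w. Re w > -4} \<inter> {w. Im w < \<epsilon>} \<inter> {w. Im w > -\<epsilon>}"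
  have cS: "convex S" unfolding S_def
    by (intro convex_Int convex_halfspace_Re_lt convex_halfspace_Re_gt convex_halfspace_Im_lt convex_halfspace_Im_gt)
  have SA: "S \<subseteq> A"
  proof
    fix w assume w: "w \<in> S"
    have "w \<in> ball (of_real (Re w)) \<epsilon>"
      using w by (simp add: S_def dist_norm cmod_def abs_less_iff power2_eq_square complex_eq_iff)
    moreover have "(of_real (Re w) :: complex) \<in> of_real ` {-4..4}" using w by (auto simp: S_def)
    ultimately show "w \<in> A" using \<epsilon>(2) by blast
  qed
  define \<eta> where "\<eta> = \<epsilon> / 2"
  have \<eta>: "\<eta> > 0" "\<eta> < \<epsilon>" using \<epsilon> by (auto simp: \<eta>_def)
  define a :: complex where "a = - of_real pi"
  define b :: complex where "b = of_real pi"
  define c :: complex where "c = of_real pi + \<i> * of_real \<eta>"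
  define d :: complex where "d = - of_real pi + \<i> * of_real \<eta>"
  have pi4: "pi < 4" using pi_less_4 .
  have abcdS: "a \<in> S" "b \<in> S" "c \<in> S" "d \<in> S"
    using pi4 pi_gt3 \<eta> \<epsilon> by (auto simp: S_def a_def b_def c_def d_def)
  have holGc: "(\<lambda>w. G (cos w)) holomorphic_on S"
  proof -
    have "(G \<circ> cos) holomorphic_on S"
      by (rule holomorphic_on_compose_gen[OF _ holomorphic_on_subset[OF holG]])
        (use SA in \<open>auto simp: A_def intro: holomorphic_intros\<close>)
    thus ?thesis by (simp add: o_def)
  qed
  have segS: "closed_segment d c \<subseteq> S" by (rule closed_segment_subset[OF abcdS(4,3) cS])
  have "compact ((\<lambda>w. G (cos w)) ` closed_segment d c)"
    by (intro compact_continuous_image continuous_on_subset[OF holomorphic_on_imp_continuous_on[OF holGc] segS])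
      simp
  then obtain M0 where M0: "M0 > 0" "\<And>w. w \<in> closed_segment d c \<Longrightarrow> norm (G (cos w)) \<le> M0"
    using compact_imp_bounded bounded_pos by (metis image_eqI)
  have Imseg: "Im w = \<eta>" if "w \<in> closed_segment d c" for w
  proof -
    from that obtain u where "w = (1 - u) *\<^sub>R d + u *\<^sub>R c" by (auto simp: closed_segment_def)
    hence "Im w = Im ((1 - u) *\<^sub>R d + u *\<^sub>R c)" by simp
    thus ?thesis by (simp add: c_def d_def algebra_simps)
  qed
  show ?thesis
  proof (rule that[of \<eta> "M0 * (2 * pi)"])
    show "\<eta> > 0" by (rule \<eta>)
    fix s :: nat
    define H where "H = (\<lambda>w. G (cos w) * exp (\<i> * of_nat s * w))"
    have holH: "H holomorphic_on S" unfolding H_def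
      by (intro holomorphic_intros holGc)
    have contH: "continuous_on S H" by (rule holomorphic_on_imp_continuous_on[OF holH])
    have ci: "H contour_integrable_on linepath p q" if "p \<in> S" "q \<in> S" for p q
      by (rule contour_integrable_continuous_linepath, rule continuous_on_subset[OF contH],
          rule closed_segment_subset[OF that cS])
    define g where "g = linepath a b +++ (linepath b c +++ (linepath c d +++ linepath d a))"
    have vp: "valid_path g" unfolding g_def by (auto intro!: valid_path_join)
    have pim: "path_image g \<subseteq> S" unfolding g_def
      using closed_segment_subset[OF _ _ cS] abcdS
      by (auto simp: path_image_join)
    have "(H has_contour_integral 0) g"
      by (rule Cauchy_theorem_convex_simple[OF holH cS vp pim]) (simp add: g_def)
    moreover have "(H has_contour_integral
        (contour_integral (linepath a b) H + (contour_integral (linepath b c) H +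
        (contour_integral (linepath c d) H + contour_integral (linepath d a) H)))) g"
      unfolding g_def
      by (intro has_contour_integral_join has_contour_integral_integral ci abcdS valid_path_join) auto
    ultimately have sum0: "contour_integral (linepath a b) H + (contour_integral (linepath b c) H +
        (contour_integral (linepath c d) H + contour_integral (linepath d a) H)) = 0"
      using has_contour_integral_unique by blast
    have side: "contour_integral (linepath b c) H + contour_integral (linepath d a) H = 0"
    proof -
      have "contour_integral (linepath d a) H = - contour_integral (linepath a d) H"
        using contour_integral_reversepath[of "linepath a d" H] by simp
      moreover have "contour_integral (linepath b c) H = contour_integral (linepath a d) H"
      proof -
        have "\<And>t. H (linepath b c t) * (c - b) = H (linepath a d t) * (d - a)"
        proof -
          fix t
          have "linepath b c t = linepath a d t + 2 * of_real pi"
            by (simp add: linepath_def a_def b_def c_def d_def algebra_simps)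
          moreover have "c - b = d - a" by (simp add: a_def b_def c_def d_def)
          ultimately show "H (linepath b c t) * (c - b) = H (linepath a d t) * (d - a)"
            by (simp add: H_def periodic_H)
        qed
        thus ?thesis by (simp add: contour_integral_integral)
      qed
      ultimately show ?thesis by simp
    qed
    have top: "norm (contour_integral (linepath c d) H) \<le> M0 * exp (- \<eta>) ^ s * (2 * pi)"
    proof -
      have "norm (contour_integral (linepath d c) H) \<le> (M0 * exp (- \<eta>) ^ s) * norm (c - d)"
      proof (rule has_contour_integral_bound_linepath[OF has_contour_integral_integral[OF ci[OF abcdS(4,3)]]])
        show "0 \<le> M0 * exp (- \<eta>) ^ s" using M0 by simp
        fix w assume w: "w \<in> closed_segment d c"
        have "norm (exp (\<i> * of_nat s * w)) = exp (- \<eta>) ^ s"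
          using Imseg[OF w] by (simp add: norm_exp_eq_Re exp_of_nat_mult[symmetric])
        thus "norm (H w) \<le> M0 * exp (- \<eta>) ^ s"
          using M0(2)[OF w] by (simp add: H_def norm_mult mult_right_mono)
      qed
      moreover have "norm (c - d) = 2 * pi" by (simp add: c_def d_def)
      moreover have "contour_integral (linepath c d) H = - contour_integral (linepath d c) H"
        using contour_integral_reversepath[of "linepath d c" H] by simp
      ultimately show ?thesis by simp
    qed
    have bot: "((\<lambda>t. H (of_real t)) has_integral contour_integral (linepath a b) H) {-pi..pi}"
    proof -
      have "(H has_contour_integral contour_integral (linepath a b) H) (linepath a b)"
        by (intro has_contour_integral_integral ci abcdS)
      thus ?thesis
        by (subst (asm) has_contour_integral_linepath_Reals_iff) (auto simp: a_def b_def)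
    qed
    have Hr: "\<And>t. H (of_real t) = G (of_real (cos t)) * exp (\<i> * of_nat s * of_real t)"
      by (simp add: H_def cos_of_real)
    have eqI: "integral {-pi..pi} (\<lambda>t. G (of_real (cos t)) * exp (\<i> * of_nat s * of_real t)) = contour_integral (linepath a b) H"
      using bot Hr by (simp add: integral_unique)
    show "((\<lambda>t. G (of_real (cos t)) * exp (\<i> * of_nat s * of_real t)) has_integral
          (integral {-pi..pi} (\<lambda>t. G (of_real (cos t)) * exp (\<i> * of_nat s * of_real t)))) {-pi..pi}
          \<and> norm (integral {-pi..pi} (\<lambda>t. G (of_real (cos t)) * exp (\<i> * of_nat s * of_real t))) \<le> M0 * (2 * pi) * exp (- \<eta>) ^ s"
    proof
      show "((\<lambda>t. G (of_real (cos t)) * exp (\<i> * of_nat s * of_real t)) has_integral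
          (integral {-pi..pi} (\<lambda>t. G (of_real (cos t)) * exp (\<i> * of_nat s * of_real t)))) {-pi..pi}"
        using bot Hr eqI by simp
      have "contour_integral (linepath a b) H = - contour_integral (linepath c d) H"
      proof -
        have "contour_integral (linepath a b) H + contour_integral (linepath c d) H
          = (contour_integral (linepath a b) H + (contour_integral (linepath b c) H +
        (contour_integral (linepath c d) H + contour_integral (linepath d a) H))) -
          (contour_integral (linepath b c) H + contour_integral (linepath d a) H)"
          by (simp add: algebra_simps)
        also have "\<dots> = 0" using sum0 side by simp
        finally show ?thesis by (simp add: eq_neg_iff_add_eq_0)
      qed
      thus "norm (integral {-pi..pi} (\<lambda>t. G (of_real (cos t)) * exp (\<i> * of_nat s * of_real t))) \<le> M0 * (2 * pi) * exp (- \<eta>) ^ s"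
        using top eqI by (simp add: mult_ac)
    qed
  qed
qed

definition ch :: "(real \<Rightarrow> real) \<Rightarrow> nat \<Rightarrow> real" where
  "ch g s = integral {0..pi} (\<lambda>t. g (cos t) * cos (real s * t)) / pi"

lemma Re_pair:
  fixes z :: complex and x :: real
  shows "Re (z * exp (\<i> * of_nat s * of_real x)) + Re (z * exp (\<i> * of_nat s * of_real (- x)))
       = 2 * Re z * cos (real s * x)"
proof -
  have e1: "exp (\<i> * of_nat s * of_real x) = cis (real s * x)"
    by (simp add: cis_conv_exp mult_ac)
  have e2: "exp (\<i> * of_nat s * of_real (- x)) = cis (- (real s * x))"
    by (simp add: cis_conv_exp mult_ac)
  show ?thesis unfolding e1 e2 by (simp add: cis.ctr)
qed

lemma ch_decay:
  fixes G :: "complex \<Rightarrow> complex"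
  assumes holG: "G holomorphic_on U" and U: "open U" and sub: "of_real ` {-1..1} \<subseteq> U"
  obtains C \<rho> where "0 < \<rho>" "\<rho> < 1" "\<And>s. \<bar>ch (\<lambda>x. Re (G (of_real x))) s\<bar> \<le> C * \<rho> ^ s"
proof -
  obtain M \<eta> where \<eta>: "\<eta> > 0" and MI: "\<And>s::nat. ((\<lambda>t. G (of_real (cos t)) * exp (\<i> * of_nat s * of_real t)) has_integral
          (integral {-pi..pi} (\<lambda>t. G (of_real (cos t)) * exp (\<i> * of_nat s * of_real t)))) {-pi..pi}
          \<and> norm (integral {-pi..pi} (\<lambda>t. G (of_real (cos t)) * exp (\<i> * of_nat s * of_real t))) \<le> M * exp (- \<eta>) ^ s"
    using contour_decay[OF assms] by blast
  show ?thesis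
  proof (rule that[of "exp (- \<eta>)" "M / (2 * pi)"])
    show "0 < exp (- \<eta>)" by simp
    show "exp (- \<eta>) < 1" using \<eta> by simp
    fix s :: nat
    define f where "f = (\<lambda>t. G (of_real (cos t)) * exp (\<i> * of_nat s * of_real t))"
    define I where "I = integral {-pi..pi} f"
    have hI: "(f has_integral I) {-pi..pi}" and nI: "norm I \<le> M * exp (- \<eta>) ^ s"
      using MI[of s] by (simp_all add: f_def I_def)
    have int1: "f integrable_on {-pi..0}" "f integrable_on {0..pi}"
      using hI by (auto intro: integrable_subinterval_real[of f "-pi" pi] simp: has_integral_integrable)
    define I1 where "I1 = integral {-pi..0} f"
    define I2 where "I2 = integral {0..pi} f"
    have h1: "(f has_integral I1) {-pi..0}" and h2: "(f has_integral I2) {0..pi}"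
      using int1 by (auto simp: I1_def I2_def)
    have "(f has_integral (I1 + I2)) {-pi..pi}"
      by (rule has_integral_combine[OF _ _ h1 h2]) auto
    hence II: "I = I1 + I2" using hI has_integral_unique by blast
    have h1': "((\<lambda>t. f (- t)) has_integral I1) {0..pi}"
    proof -
      have "((\<lambda>x. f (- x)) has_integral I1) {-0..-(-pi)}"
        using h1 by (subst has_integral_reflect_real)
      thus ?thesis by simp
    qed
    have "((\<lambda>t. f t + f (- t)) has_integral (I2 + I1)) {0..pi}"
      by (rule has_integral_add[OF h2 h1'])
    hence "((Re \<circ> (\<lambda>t. f t + f (- t))) has_integral Re (I2 + I1)) {0..pi}"
      by (rule has_integral_linear) (rule bounded_linear_Re)
    moreover have "(Re \<circ> (\<lambda>t. f t + f (- t))) = (\<lambda>t. 2 * (Re (G (of_real (cos t))) * cos (real s * t)))"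
      by (rule ext) (simp add: f_def Re_pair[of "G (of_real (cos _))" s, simplified])
    ultimately have "((\<lambda>t. 2 * (Re (G (of_real (cos t))) * cos (real s * t))) has_integral Re I) {0..pi}"
      using II by (simp add: add.commute)
    hence "((\<lambda>t. Re (G (of_real (cos t))) * cos (real s * t)) has_integral Re I / 2) {0..pi}"
      using has_integral_cmul[of _ "Re I" "{0..pi}" "1/2"] by fastforce
    hence chv: "ch (\<lambda>x. Re (G (of_real x))) s = Re I / (2 * pi)"
      by (simp add: ch_def integral_unique)
    have "\<bar>Re I\<bar> \<le> M * exp (- \<eta>) ^ s" using nI abs_Re_le_cmod order_trans by blast
    thus "\<bar>ch (\<lambda>x. Re (G (of_real x))) s\<bar> \<le> M / (2 * pi) * exp (- \<eta>) ^ s"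
      unfolding chv using pi_gt_zero by (simp add: divide_le_eq abs_divide)
  qed
qed

lemma transfer:
  fixes g :: "real \<Rightarrow> real"
  assumes cg: "continuous_on {-1..1} g"
  shows "((\<lambda>x. g x / sqrt (1 - x\<^sup>2)) has_integral integral {0..pi} (\<lambda>t. g (cos t))) {-1..1}"
proof -
  define k where "k = (\<lambda>t. g (cos t))"
  have ck: "continuous_on {0..pi} k" unfolding k_def
    by (rule continuous_on_compose2[OF cg]) (auto intro: continuous_intros)
  define \<Phi> where "\<Phi> = (\<lambda>u. integral {0..u} k)"
  define \<Psi> where "\<Psi> = (\<lambda>x. \<Phi> (arccos x))"
  have cPhi: "continuous_on {0..pi} \<Phi>" unfolding \<Phi>_def
    by (rule indefinite_integral_continuous_1) (rule integrable_continuous_interval[OF ck])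
  have cPsi: "continuous_on {-1..1} \<Psi>" unfolding \<Psi>_def
    by (rule continuous_on_compose2[OF cPhi]) (auto intro: continuous_intros arccos_lbound arccos_ubound)
  have dPsi: "(\<Psi> has_vector_derivative (- (g x / sqrt (1 - x\<^sup>2)))) (at x)" if x: "x \<in> {-1<..<1}" for x
  proof -
    define \<theta> where "\<theta> = arccos x"
    have th: "0 < \<theta>" "\<theta> < pi" using arccos_lt_bounded[of x] x by (auto simp: \<theta>_def)
    have "(\<Phi> has_vector_derivative k \<theta>) (at \<theta> within {0..pi})"
      unfolding \<Phi>_def by (rule integral_has_vector_derivative[OF ck]) (use th in auto)
    hence "(\<Phi> has_vector_derivative k \<theta>) (at \<theta> within {0<..<pi})"
      by (rule has_vector_derivative_within_subset) auto
    hence "(\<Phi> has_vector_derivative k \<theta>) (at \<theta>)"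
      using th by (subst (asm) has_vector_derivative_within_open) auto
    hence d1: "(\<Phi> has_real_derivative k \<theta>) (at (arccos x))"
      by (simp add: has_real_derivative_iff_has_vector_derivative \<theta>_def)
    have d2: "(arccos has_real_derivative inverse (- sqrt (1 - x\<^sup>2))) (at x)"
      using DERIV_arccos[of x] x by auto
    have "((\<lambda>x. \<Phi> (arccos x)) has_real_derivative k \<theta> * inverse (- sqrt (1 - x\<^sup>2))) (at x)"
      by (rule DERIV_chain2[OF d1 d2])
    moreover have "k \<theta> = g x" using x by (simp add: k_def \<theta>_def cos_arccos)
    ultimately show ?thesis
      by (simp add: \<Psi>_def has_real_derivative_iff_has_vector_derivative divide_inverse)
  qed
  have "((\<lambda>x. - (g x / sqrt (1 - x\<^sup>2))) has_integral (\<Psi> 1 - \<Psi> (-1))) {-1..1}"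
    by (rule fundamental_theorem_of_calculus_interior[OF _ cPsi dPsi]) auto
  moreover have "\<Psi> 1 - \<Psi> (-1) = - integral {0..pi} k"
    by (simp add: \<Psi>_def \<Phi>_def)
  ultimately have "((\<lambda>x. - (g x / sqrt (1 - x\<^sup>2))) has_integral - integral {0..pi} k) {-1..1}" by simp
  from has_integral_neg[OF this] show ?thesis by (simp add: k_def)
qed

definition Cf :: "(real \<Rightarrow> real) \<Rightarrow> real \<Rightarrow> nat \<Rightarrow> real" where
  "Cf g b s = Wt b s / pi * integral {-1..1} (\<lambda>x. g x * Jac b s x * (1 - x) powr b * (1 + x) powr (-1/2))"

lemma powr_mhalf:
  fixes y :: real assumes "0 < y"
  shows "y powr (-1/2) = 1 / sqrt y"
proof -
  have "y powr (-1/2) = y powr (- (1/2))" by simp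
  also have "\<dots> = inverse (y powr (1/2))" by (rule powr_minus)
  also have "\<dots> = inverse (sqrt y)" using assms by (simp add: powr_half_sqrt)
  finally show ?thesis by (simp only: inverse_eq_divide)
qed

lemma weight_m:
  fixes x :: real assumes x: "-1 < x" "x < 1"
  shows "(1 - x) powr (-1/2) * (1 + x) powr (-1/2) = 1 / sqrt (1 - x\<^sup>2)"
proof -
  have "sqrt (1 - x) * sqrt (1 + x) = sqrt (1 - x\<^sup>2)"
    by (simp add: real_sqrt_mult[symmetric] power2_eq_square algebra_simps)
  moreover have "(1 - x) powr (-1/2) = 1 / sqrt (1 - x)" by (rule powr_mhalf) (use x in simp)
  moreover have "(1 + x) powr (-1/2) = 1 / sqrt (1 + x)" by (rule powr_mhalf) (use x in simp)
  ultimately show ?thesis by (simp only:) simp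
qed

lemma weight_p:
  fixes x :: real assumes x: "-1 < x" "x < 1"
  shows "Jac (1/2) s x * (1 - x) powr (1/2) * (1 + x) powr (-1/2)
       = (cos (real s * arccos x) - cos (real (Suc s) * arccos x)) / sqrt (1 - x\<^sup>2)"
proof -
  define \<theta> where "\<theta> = arccos x"
  have th: "0 < \<theta>" "\<theta> < pi" using arccos_lt_bounded[of x] x by (auto simp: \<theta>_def)
  have sn: "sin (\<theta> / 2) > 0" using th by (intro sin_gt_zero) auto
  have J: "Jac (1/2) s x = sin ((real s + 1/2) * \<theta>) / sin (\<theta> / 2)"
    using th by (simp add: Jac_def \<theta>_def)
  have w: "(1 - x) powr (1/2) * (1 + x) powr (-1/2) = (1 - x) / sqrt (1 - x\<^sup>2)"
  proof -
    have "(1 - x) powr (1/2) = sqrt (1 - x)" using x by (simp add: powr_half_sqrt)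
    moreover have "(1 + x) powr (-1/2) = 1 / sqrt (1 + x)" by (rule powr_mhalf) (use x in simp)
    moreover have "sqrt (1 - x\<^sup>2) = sqrt (1 - x) * sqrt (1 + x)"
      by (simp add: real_sqrt_mult[symmetric] power2_eq_square algebra_simps)
    moreover have "sqrt (1 - x) * sqrt (1 - x) = 1 - x" using x by simp
    moreover have "sqrt (1 - x) > 0" "sqrt (1 + x) > 0" using x by auto
    ultimately show ?thesis by (simp add: field_simps)
  qed
  have c: "1 - x = 2 * (sin (\<theta> / 2))\<^sup>2"
  proof -
    have "x = cos \<theta>" using x by (simp add: \<theta>_def cos_arccos)
    also have "\<theta> = 2 * (\<theta> / 2)" by simp
    finally have "x = cos (2 * (\<theta> / 2))" .
    thus ?thesis unfolding cos_double_sin by simp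
  qed
  have pr: "2 * sin ((real s + 1/2) * \<theta>) * sin (\<theta> / 2) = cos (real s * \<theta>) - cos (real (Suc s) * \<theta>)"
  proof -
    have "cos (real s * \<theta>) = cos ((real s + 1/2) * \<theta> - \<theta> / 2)" by (simp add: algebra_simps)
    moreover have "cos (real (Suc s) * \<theta>) = cos ((real s + 1/2) * \<theta> + \<theta> / 2)" by (simp add: algebra_simps)
    ultimately show ?thesis by (simp add: cos_diff cos_add)
  qed
  have "Jac (1/2) s x * (1 - x) powr (1/2) * (1 + x) powr (-1/2) = Jac (1/2) s x * (1 - x) / sqrt (1 - x\<^sup>2)"
    using w by (simp add: mult.assoc)
  also have "Jac (1/2) s x * (1 - x) = 2 * sin ((real s + 1/2) * \<theta>) * sin (\<theta> / 2)"
    unfolding J c using sn by (simp add: power2_eq_square field_simps)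
  finally show ?thesis unfolding pr by (simp add: \<theta>_def)
qed

lemma cont_gcos: "continuous_on {-1..1} g \<Longrightarrow> continuous_on {0..pi} (\<lambda>t. g (cos t))"
  by (rule continuous_on_compose2[of "{-1..1}" g]) (auto intro: continuous_intros)

lemma cont_ch_int: "continuous_on {-1..1} g \<Longrightarrow> continuous_on {0..pi} (\<lambda>t. g (cos t) * cos (real s * t))"
  by (intro continuous_on_mult cont_gcos) (auto intro: continuous_intros)

lemma cont_garc: "continuous_on {-1..1} g \<Longrightarrow> continuous_on {-1..1} (\<lambda>x. g x * cos (c * arccos x))"
  by (intro continuous_on_mult continuous_on_cos continuous_on_arccos continuous_on_id continuous_on_const) auto

lemma pt_m:
  fixes x :: real assumes x: "-1 < x" "x < 1"
  shows "g x * Jac (-1/2) s x * (1 - x) powr (-1/2) * (1 + x) powr (-1/2) = g x * cos (real s * arccos x) / sqrt (1 - x\<^sup>2)"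
proof -
  have J: "Jac (-1/2) s x = cos (real s * arccos x)" by (simp add: Jac_def)
  have "g x * Jac (-1/2) s x * (1 - x) powr (-1/2) * (1 + x) powr (-1/2) = g x * Jac (-1/2) s x * ((1 - x) powr (-1/2) * (1 + x) powr (-1/2))"
    by (simp only: mult.assoc)
  also have "\<dots> = g x * cos (real s * arccos x) * (1 / sqrt (1 - x\<^sup>2))" by (simp only: weight_m[OF x] J)
  finally show ?thesis by simp
qed

lemma pt_p:
  fixes x :: real assumes x: "-1 < x" "x < 1"
  shows "g x * Jac (1/2) s x * (1 - x) powr (1/2) * (1 + x) powr (-1/2) = g x * (cos (real s * arccos x) - cos (real (Suc s) * arccos x)) / sqrt (1 - x\<^sup>2)"
proof -
  have "g x * Jac (1/2) s x * (1 - x) powr (1/2) * (1 + x) powr (-1/2) = g x * (Jac (1/2) s x * (1 - x) powr (1/2) * (1 + x) powr (-1/2))"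
    by (simp only: mult.assoc)
  also have "\<dots> = g x * ((cos (real s * arccos x) - cos (real (Suc s) * arccos x)) / sqrt (1 - x\<^sup>2))" by (simp only: weight_p[OF x])
  finally show ?thesis by simp
qed

lemma Cf_m:
  assumes cg: "continuous_on {-1..1} g"
  shows "Cf g (-1/2) s = Wt (-1/2) s * ch g s"
proof -
  have "integral {-1..1} (\<lambda>x. g x * Jac (-1/2) s x * (1 - x) powr (-1/2) * (1 + x) powr (-1/2))
      = integral {-1..1} (\<lambda>x. g x * cos (real s * arccos x) / sqrt (1 - x\<^sup>2))"
  proof (rule integral_spike[of "{-1,1}"])
    show "negligible {-1, 1::real}" by simp
    fix x assume "x \<in> {-1..1::real} - {-1, 1}"
    hence x: "-1 < x" "x < 1" by auto
    show "g x * cos (real s * arccos x) / sqrt (1 - x\<^sup>2) = g x * Jac (-1/2) s x * (1 - x) powr (-1/2) * (1 + x) powr (-1/2)"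
      using weight_m[OF x] by (simp add: Jac_def mult.assoc)
  qed
  also have "\<dots> = integral {0..pi} (\<lambda>t. g (cos t) * cos (real s * arccos (cos t)))"
    by (rule integral_unique, rule transfer, rule cont_garc[OF cg])
  also have "\<dots> = integral {0..pi} (\<lambda>t. g (cos t) * cos (real s * t))"
    by (rule integral_cong) (simp add: arccos_cos)
  finally show ?thesis by (simp add: Cf_def ch_def)
qed

lemma Cf_p:
  assumes cg: "continuous_on {-1..1} g"
  shows "Cf g (1/2) s = ch g s - ch g (Suc s)"
proof -
  have "integral {-1..1} (\<lambda>x. g x * Jac (1/2) s x * (1 - x) powr (1/2) * (1 + x) powr (-1/2))
      = integral {-1..1} (\<lambda>x. g x * (cos (real s * arccos x) - cos (real (Suc s) * arccos x)) / sqrt (1 - x\<^sup>2))"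
  proof (rule integral_spike[of "{-1,1}"])
    show "negligible {-1, 1::real}" by simp
    fix x assume "x \<in> {-1..1::real} - {-1, 1}"
    hence x: "-1 < x" "x < 1" by auto
    show "g x * (cos (real s * arccos x) - cos (real (Suc s) * arccos x)) / sqrt (1 - x\<^sup>2) = g x * Jac (1/2) s x * (1 - x) powr (1/2) * (1 + x) powr (-1/2)"
      using weight_p[OF x, of s] by (simp add: mult.assoc)
  qed
  also have "\<dots> = integral {0..pi} (\<lambda>t. g (cos t) * (cos (real s * arccos (cos t)) - cos (real (Suc s) * arccos (cos t))))"
    by (rule integral_unique, rule transfer) (simp only: right_diff_distrib, intro continuous_on_diff cont_garc[OF cg])
  also have "\<dots> = integral {0..pi} (\<lambda>t. g (cos t) * cos (real s * t) - g (cos t) * cos (real (Suc s) * t))"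
    by (rule integral_cong) (simp add: arccos_cos algebra_simps)
  also have "\<dots> = integral {0..pi} (\<lambda>t. g (cos t) * cos (real s * t)) - integral {0..pi} (\<lambda>t. g (cos t) * cos (real (Suc s) * t))"
    by (rule integral_diff; rule integrable_continuous_interval; rule cont_ch_int[OF cg])
  finally show ?thesis by (simp add: Cf_def ch_def Wt_def diff_divide_distrib)
qed

lemma ch_has_int:
  assumes "continuous_on {-1..1} h"
  shows "((\<lambda>t. h (cos t) * cos (real k * t)) has_integral pi * ch h k) {0..pi}"
proof -
  have "((\<lambda>t. h (cos t) * cos (real k * t)) has_integral integral {0..pi} (\<lambda>t. h (cos t) * cos (real k * t))) {0..pi}"
    by (rule integrable_integral, rule integrable_continuous_interval, rule cont_ch_int[OF assms])
  thus ?thesis by (simp add: ch_def)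
qed

lemma cos_int0:
  assumes "1 \<le> s"
  shows "((\<lambda>t. cos (real s * t)) has_integral 0) {0..pi}"
proof -
  have "((\<lambda>t. cos (real s * t)) has_integral (sin (real s * pi) / real s - sin (real s * 0) / real s)) {0..pi}"
  proof (rule fundamental_theorem_of_calculus)
    fix t assume "t \<in> {0..pi}"
    have "((\<lambda>t. sin (real s * t) / real s) has_real_derivative (cos (real s * t) * real s / real s)) (at t within {0..pi})"
      by (auto intro!: derivative_eq_intros)
    thus "((\<lambda>t. sin (real s * t) / real s) has_vector_derivative cos (real s * t)) (at t within {0..pi})"
      using assms by (simp add: has_real_derivative_iff_has_vector_derivative)
  qed simp
  thus ?thesis by simp
qed

lemma ch_shift:
  assumes ch: "continuous_on {-1..1} h" and geq: "\<And>x. x \<in> {-1..1} \<Longrightarrow> g x = c + (x - 1) * h x"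
    and s: "1 \<le> s"
  shows "2 * ch g s = ch h (s - 1) + ch h (Suc s) - 2 * ch h s"
proof -
  have e: "2 * (g (cos t) * cos (real s * t)) = c * 2 * cos (real s * t) + (h (cos t) * cos (real (s - 1) * t)
      + h (cos t) * cos (real (Suc s) * t) - 2 * (h (cos t) * cos (real s * t)))" for t
  proof -
    have "cos t \<in> {-1..1}" by auto
    hence gc: "g (cos t) = c + (cos t - 1) * h (cos t)" by (rule geq)
    have "cos (real (s - 1) * t) = cos (real s * t - t)" using s by (simp add: of_nat_diff algebra_simps)
    also have "\<dots> = cos (real s * t) * cos t + sin (real s * t) * sin t" by (rule cos_diff)
    finally have c1: "cos (real (s - 1) * t) = cos (real s * t) * cos t + sin (real s * t) * sin t" .
    have "cos (real (Suc s) * t) = cos (real s * t + t)" by (simp add: algebra_simps)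
    also have "\<dots> = cos (real s * t) * cos t - sin (real s * t) * sin t" by (rule cos_add)
    finally have c2: "cos (real (Suc s) * t) = cos (real s * t) * cos t - sin (real s * t) * sin t" .
    show ?thesis unfolding gc c1 c2 by (simp add: algebra_simps)
  qed
  have "((\<lambda>t. c * 2 * cos (real s * t) + (h (cos t) * cos (real (s - 1) * t)
      + h (cos t) * cos (real (Suc s) * t) - 2 * (h (cos t) * cos (real s * t)))) has_integral
      (c * 2 * 0 + (pi * ch h (s - 1) + pi * ch h (Suc s) - 2 * (pi * ch h s)))) {0..pi}"
    by (intro has_integral_add has_integral_diff has_integral_mult_right cos_int0 s ch_has_int ch)
  hence "((\<lambda>t. 2 * (g (cos t) * cos (real s * t))) has_integral
      (pi * ch h (s - 1) + pi * ch h (Suc s) - 2 * (pi * ch h s))) {0..pi}"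
    unfolding e[symmetric] by simp
  moreover have "((\<lambda>t. 2 * (g (cos t) * cos (real s * t))) has_integral 2 * (pi * ch g s)) {0..pi}"
  proof -
    have "((\<lambda>t. g (cos t) * cos (real s * t)) has_integral integral {0..pi} (\<lambda>t. g (cos t) * cos (real s * t))) {0..pi}"
    proof (rule integrable_integral)
      have "(\<lambda>t. 2 * (g (cos t) * cos (real s * t))) integrable_on {0..pi}"
        using calculation by blast
      from integrable_cmul[OF this, of "1/2"] show "(\<lambda>t. g (cos t) * cos (real s * t)) integrable_on {0..pi}"
        by simp
    qed
    thus ?thesis by (intro has_integral_mult_right) (simp add: ch_def)
  qed
  ultimately have "2 * (pi * ch g s) = pi * ch h (s - 1) + pi * ch h (Suc s) - 2 * (pi * ch h s)"
    using has_integral_unique by blast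
  hence "pi * (2 * ch g s) = pi * (ch h (s - 1) + ch h (Suc s) - 2 * ch h s)" by (simp add: algebra_simps)
  thus ?thesis using pi_gt_zero by simp
qed

lemma T_action:
  fixes e :: "nat \<Rightarrow> real"
  assumes e0: "e \<longlonglongrightarrow> 0"
  shows "(\<lambda>z. (e z - e (Suc z)) * Tm z s) sums (Wt (-1/2) s * e s)"
proof -
  define u where "u = (\<lambda>z. if z \<le> s then e s else e z)"
  have "u \<longlonglongrightarrow> 0"
  proof -
    have "eventually (\<lambda>z. e z = u z) sequentially"
      using eventually_gt_at_top[of s] by eventually_elim (simp add: u_def)
    thus ?thesis using e0 tendsto_cong by fastforce
  qed
  from telescope_sums'[OF this] have "(\<lambda>z. u z - u (Suc z)) sums (e s)" by (simp add: u_def)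
  hence "(\<lambda>z. (u z - u (Suc z)) * Wt (-1/2) s) sums (e s * Wt (-1/2) s)" by (rule sums_mult2)
  moreover have "(\<lambda>z. (u z - u (Suc z)) * Wt (-1/2) s) = (\<lambda>z. (e z - e (Suc z)) * Tm z s)"
    by (rule ext) (auto simp: u_def Tm_def Wt_def)
  ultimately show ?thesis by (simp add: mult.commute)
qed

lemma phi_action:
  fixes g h :: "nat \<Rightarrow> real"
  assumes h0: "h \<longlonglongrightarrow> 0" and rel: "\<And>z. 1 \<le> z \<Longrightarrow> 2 * g z = h (z - 1) + h (Suc z) - 2 * h z"
  shows "(\<lambda>z. (Wt (-1/2) z * g z) * phim z s) sums (h s - h (Suc s))"
proof -
  define D where "D = (\<lambda>z. h (Suc z) - h z)"
  have D0: "D \<longlonglongrightarrow> 0" unfolding D_def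
    using tendsto_diff[OF LIMSEQ_Suc[OF h0] h0] by simp
  define u where "u = (\<lambda>z. if z \<le> s then D s else D z)"
  have "u \<longlonglongrightarrow> 0"
  proof -
    have "eventually (\<lambda>z. D z = u z) sequentially"
      using eventually_gt_at_top[of s] by eventually_elim (simp add: u_def)
    thus ?thesis using D0 tendsto_cong by fastforce
  qed
  from telescope_sums[OF this] have T: "(\<lambda>z. u (Suc z) - u z) sums (0 - D s)" by (simp add: u_def)
  have "(\<lambda>z. (Wt (-1/2) (Suc z) * g (Suc z)) * phim (Suc z) s) = (\<lambda>z. u (Suc z) - u z)"
  proof (rule ext)
    fix z
    show "(Wt (-1/2) (Suc z) * g (Suc z)) * phim (Suc z) s = u (Suc z) - u z"
    proof (cases "Suc z > s")
      case True
      have "2 * g (Suc z) = h z + h (Suc (Suc z)) - 2 * h (Suc z)" using rel[of "Suc z"] by simp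
      thus ?thesis using True by (cases "z = s") (auto simp: Wt_def phim_def u_def D_def)
    next
      case False thus ?thesis by (simp add: phim_def u_def)
    qed
  qed
  with T have "(\<lambda>z. (Wt (-1/2) (Suc z) * g (Suc z)) * phim (Suc z) s) sums (h s - h (Suc s))"
    by (simp add: D_def)
  thus ?thesis by (subst (asm) sums_Suc_iff) (simp add: phim_def)
qed

definition lowtri :: "(nat \<Rightarrow> nat \<Rightarrow> real) \<Rightarrow> bool" where
  "lowtri M \<longleftrightarrow> (\<forall>z y. z < y \<longrightarrow> M z y = 0)"

definition polyb :: "(nat \<Rightarrow> nat \<Rightarrow> real) \<Rightarrow> bool" where
  "polyb M \<longleftrightarrow> (\<exists>K p. \<forall>z y. \<bar>M z y\<bar> \<le> K * real (Suc z) ^ p)"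

definition rapid :: "(nat \<Rightarrow> real) \<Rightarrow> bool" where
  "rapid c \<longleftrightarrow> (\<forall>k. summable (\<lambda>z. real (Suc z) ^ k * \<bar>c z\<bar>))"

lemma mmul_fin: "lowtri f \<Longrightarrow> mmul f g x y = (\<Sum>z\<le>x. f x z * g z y)"
  unfolding mmul_def by (rule suminf_finite) (auto simp: lowtri_def)

lemma lowtri_mmul: "lowtri f \<Longrightarrow> lowtri g \<Longrightarrow> lowtri (mmul f g)"
  unfolding lowtri_def by (auto simp: mmul_fin[unfolded lowtri_def] intro!: sum.neutral)

lemma polyb_mmul:
  assumes lf: "lowtri f" and pf: "polyb f" and pg: "polyb g"
  shows "polyb (mmul f g)"
proof -
  obtain K1 p where K1: "\<And>z y. \<bar>f z y\<bar> \<le> K1 * real (Suc z) ^ p" using pf by (auto simp: polyb_def)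
  obtain K2 q where K2: "\<And>z y. \<bar>g z y\<bar> \<le> K2 * real (Suc z) ^ q" using pg by (auto simp: polyb_def)
  have "\<bar>f 0 0\<bar> \<le> K1" using K1[of 0 0] by simp
  hence K1p: "K1 \<ge> 0" using abs_ge_zero[of "f 0 0"] by linarith
  have "\<bar>g 0 0\<bar> \<le> K2" using K2[of 0 0] by simp
  hence K2p: "K2 \<ge> 0" using abs_ge_zero[of "g 0 0"] by linarith
  have "\<bar>mmul f g x y\<bar> \<le> (K1 * K2) * real (Suc x) ^ (Suc (p + q))" for x y
  proof -
    have "\<bar>mmul f g x y\<bar> \<le> (\<Sum>z\<le>x. \<bar>f x z * g z y\<bar>)"
      unfolding mmul_fin[OF lf] by (rule sum_abs)
    also have "\<dots> \<le> (\<Sum>z\<le>x. K1 * real (Suc x) ^ p * (K2 * real (Suc x) ^ q))"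
    proof (rule sum_mono)
      fix z assume z: "z \<in> {..x}"
      have "\<bar>g z y\<bar> \<le> K2 * real (Suc x) ^ q"
      proof -
        have "real (Suc z) ^ q \<le> real (Suc x) ^ q" using z by (intro power_mono) auto
        hence "K2 * real (Suc z) ^ q \<le> K2 * real (Suc x) ^ q" using K2p by (rule mult_left_mono)
        thus ?thesis using K2[of z y] by linarith
      qed
      thus "\<bar>f x z * g z y\<bar> \<le> K1 * real (Suc x) ^ p * (K2 * real (Suc x) ^ q)"
        unfolding abs_mult using K1[of x z] by (intro mult_mono) auto
    qed
    also have "\<dots> = (K1 * K2) * real (Suc x) ^ (Suc (p + q))"
      by (simp add: power_add algebra_simps)
    finally show ?thesis .
  qed
  thus ?thesis unfolding polyb_def by blast
qed

lemma lowtri_Tm: "lowtri Tm" by (auto simp: lowtri_def Tm_def)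
lemma lowtri_phim: "lowtri phim" by (auto simp: lowtri_def phim_def)
lemma lowtri_mid: "lowtri mid" by (auto simp: lowtri_def mid_def)
lemma polyb_Tm: "polyb Tm" unfolding polyb_def by (rule exI[of _ 2], rule exI[of _ 0]) (auto simp: Tm_def)
lemma polyb_phim: "polyb phim" unfolding polyb_def by (rule exI[of _ 1], rule exI[of _ 0]) (auto simp: phim_def)
lemma polyb_mid: "polyb mid" unfolding polyb_def by (rule exI[of _ 1], rule exI[of _ 0]) (auto simp: mid_def)

lemma lowtri_mpow: "lowtri f \<Longrightarrow> lowtri (mpow f k)"
  by (induction k) (auto intro: lowtri_mmul lowtri_mid)

lemma polyb_mpow: "lowtri f \<Longrightarrow> polyb f \<Longrightarrow> polyb (mpow f k)"
  by (induction k) (auto intro: polyb_mmul lowtri_mpow polyb_mid)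

lemma infsum_eq_suminf_nat:
  fixes f :: "nat \<Rightarrow> real"
  assumes "summable (\<lambda>n. norm (f n))"
  shows "infsum f UNIV = suminf f"
  by (rule infsumI, rule norm_summable_imp_has_sum[OF assms], rule summable_sums, rule summable_norm_cancel[OF assms])

lemma summable_on_suminf_nat:
  fixes f :: "nat \<Rightarrow> real"
  assumes "f summable_on UNIV"
  shows "suminf f = infsum f UNIV"
  using sums_unique[OF has_sum_imp_sums[OF has_sum_infsum[OF assms]]] by simp

lemma polyb_obtain:
  assumes "polyb M"
  obtains K p where "K \<ge> 0" "\<And>z y. \<bar>M z y\<bar> \<le> K * real (Suc z) ^ p"
proof -
  obtain K p where K: "\<And>z y. \<bar>M z y\<bar> \<le> K * real (Suc z) ^ p" using assms by (auto simp: polyb_def)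
  have "\<bar>M 0 0\<bar> \<le> K" using K[of 0 0] by simp
  hence "K \<ge> 0" using abs_ge_zero[of "M 0 0"] by linarith
  thus ?thesis using K that by blast
qed

lemma rapid_col:
  assumes rc: "rapid c" and pM: "polyb M"
  shows "summable (\<lambda>z. norm (c z * M z y))"
proof -
  obtain K p where K: "K \<ge> 0" "\<And>z y. \<bar>M z y\<bar> \<le> K * real (Suc z) ^ p" using pM polyb_obtain by blast
  have "summable (\<lambda>z. K * (real (Suc z) ^ p * \<bar>c z\<bar>))"
    using rc by (intro summable_mult) (auto simp: rapid_def)
  thus ?thesis
  proof (rule summable_comparison_test'[where N = 0])
    fix z
    have "\<bar>c z\<bar> * \<bar>M z y\<bar> \<le> \<bar>c z\<bar> * (K * real (Suc z) ^ p)"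
      using K(2)[of z y] by (intro mult_left_mono) auto
    thus "norm (norm (c z * M z y)) \<le> K * (real (Suc z) ^ p * \<bar>c z\<bar>)"
      by (simp add: abs_mult mult_ac)
  qed
qed

lemma assoc:
  fixes c :: "nat \<Rightarrow> real"
  assumes rc: "rapid c" and lM: "lowtri M" and pM: "polyb M" and pB: "polyb B"
  shows "suminf (\<lambda>z. c z * mmul M B z s) = suminf (\<lambda>y. suminf (\<lambda>z. c z * M z y) * B y s)"
proof -
  obtain K1 p where K1: "K1 \<ge> 0" "\<And>z y. \<bar>M z y\<bar> \<le> K1 * real (Suc z) ^ p" using pM polyb_obtain by blast
  obtain K2 q where K2: "K2 \<ge> 0" "\<And>z y. \<bar>B z y\<bar> \<le> K2 * real (Suc z) ^ q" using pB polyb_obtain by blast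
  define F where "F = (\<lambda>z y. c z * M z y * B y s)"
  have F0: "F z y = 0" if "z < y" for z y using lM that by (simp add: F_def lowtri_def)
  have rowb: "(\<Sum>y\<le>z. \<bar>F z y\<bar>) \<le> (K1 * K2) * (real (Suc z) ^ (Suc (p + q)) * \<bar>c z\<bar>)" for z
  proof -
    have "(\<Sum>y\<le>z. \<bar>F z y\<bar>) \<le> (\<Sum>y\<le>z. \<bar>c z\<bar> * (K1 * real (Suc z) ^ p * (K2 * real (Suc z) ^ q)))"
    proof (rule sum_mono)
      fix y assume y: "y \<in> {..z}"
      have "\<bar>B y s\<bar> \<le> K2 * real (Suc z) ^ q"
      proof -
        have "real (Suc y) ^ q \<le> real (Suc z) ^ q" using y by (intro power_mono) auto
        hence "K2 * real (Suc y) ^ q \<le> K2 * real (Suc z) ^ q" using K2(1) by (rule mult_left_mono)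
        thus ?thesis using K2(2)[of y s] by linarith
      qed
      hence "\<bar>M z y\<bar> * \<bar>B y s\<bar> \<le> K1 * real (Suc z) ^ p * (K2 * real (Suc z) ^ q)"
        using K1(2)[of z y] by (intro mult_mono) auto
      thus "\<bar>F z y\<bar> \<le> \<bar>c z\<bar> * (K1 * real (Suc z) ^ p * (K2 * real (Suc z) ^ q))"
        unfolding F_def abs_mult mult.assoc by (intro mult_left_mono) auto
    qed
    also have "\<dots> = (K1 * K2) * (real (Suc z) ^ (Suc (p + q)) * \<bar>c z\<bar>)"
      by (simp add: power_add algebra_simps)
    finally show ?thesis .
  qed
  have sb: "summable (\<lambda>z. (K1 * K2) * (real (Suc z) ^ (Suc (p + q)) * \<bar>c z\<bar>))"
  proof (rule summable_mult)
    show "summable (\<lambda>z. real (Suc z) ^ (Suc (p + q)) * \<bar>c z\<bar>)" using rc unfolding rapid_def by blast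
  qed
  have rowinf: "infsum (F z) UNIV = (\<Sum>y\<le>z. F z y)" for z
  proof -
    have "infsum (F z) UNIV = infsum (F z) {..z}"
      by (rule infsum_cong_neutral) (auto intro: F0)
    thus ?thesis by simp
  qed
  have rowinfn: "infsum (\<lambda>y. norm (F z y)) UNIV = (\<Sum>y\<le>z. \<bar>F z y\<bar>)" for z
  proof -
    have "infsum (\<lambda>y. norm (F z y)) UNIV = infsum (\<lambda>y. norm (F z y)) {..z}"
      by (rule infsum_cong_neutral) (auto intro: F0)
    thus ?thesis by simp
  qed
  have rowabs: "(\<lambda>y. norm (F z y)) summable_on UNIV" for z
  proof -
    have "summable (\<lambda>y. norm (norm (F z y)))"
      by (rule summable_finite[of "{..z}"]) (auto intro: F0)
    thus ?thesis by (rule norm_summable_imp_summable_on)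
  qed
  have r2: "(\<lambda>z. norm (infsum (\<lambda>y. norm (F z y)) UNIV)) summable_on UNIV"
  proof -
    have "summable (\<lambda>z. norm (norm (infsum (\<lambda>y. norm (F z y)) UNIV)))"
    proof (rule summable_comparison_test'[OF sb, where N = 0])
      fix z
      have "infsum (\<lambda>y. norm (F z y)) UNIV = (\<Sum>y\<le>z. \<bar>F z y\<bar>)"
        using rowinfn by simp
      moreover have "(\<Sum>y\<le>z. \<bar>F z y\<bar>) \<ge> 0" by (intro sum_nonneg) auto
      ultimately show "norm (norm (norm (infsum (\<lambda>y. norm (F z y)) UNIV))) \<le> (K1 * K2) * (real (Suc z) ^ (Suc (p + q)) * \<bar>c z\<bar>)"
        using rowb[of z] by simp
    qed
    thus ?thesis by (rule norm_summable_imp_summable_on)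
  qed
  have "(\<lambda>x. norm ((\<lambda>(z, y). F z y) x)) summable_on Sigma UNIV (\<lambda>_. UNIV)"
    by (subst Infinite_Sum.abs_summable_on_Sigma_iff, simp only: case_prod_conv) (use rowabs r2 in blast)
  hence sumF: "(\<lambda>(z, y). F z y) summable_on (UNIV \<times> UNIV)"
    by (rule abs_summable_summable)
  have swap: "infsum (\<lambda>z. infsum (\<lambda>y. F z y) UNIV) UNIV = infsum (\<lambda>y. infsum (\<lambda>z. F z y) UNIV) UNIV"
    by (rule infsum_swap_banach[OF sumF])
  have sumF': "(\<lambda>(y, z). F z y) summable_on Sigma UNIV (\<lambda>_. UNIV)"
    using sumF by (subst (asm) summable_on_swap) (simp add: case_prod_unfold)
  have colsum: "(\<lambda>y. infsum (\<lambda>z. F z y) UNIV) summable_on UNIV"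
    using summable_on_Sigma_banach[OF sumF'] by simp
  have col: "infsum (\<lambda>z. F z y) UNIV = suminf (\<lambda>z. c z * M z y) * B y s" for y
  proof -
    have sn: "summable (\<lambda>z. norm (c z * M z y))" by (rule rapid_col[OF rc pM])
    have "summable (\<lambda>z. norm (F z y))"
      using summable_mult2[OF sn, of "\<bar>B y s\<bar>"] by (simp add: F_def abs_mult)
    hence "infsum (\<lambda>z. F z y) UNIV = suminf (\<lambda>z. F z y)" by (rule infsum_eq_suminf_nat)
    also have "\<dots> = suminf (\<lambda>z. c z * M z y) * B y s"
      unfolding F_def by (rule suminf_mult2[symmetric]) (rule summable_norm_cancel[OF sn])
    finally show ?thesis .
  qed
  have row: "infsum (\<lambda>y. F z y) UNIV = c z * mmul M B z s" for z
    using rowinf[of z] by (simp add: F_def mmul_fin[OF lM] sum_distrib_left mult.assoc)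
  have lhs: "infsum (\<lambda>z. c z * mmul M B z s) UNIV = suminf (\<lambda>z. c z * mmul M B z s)"
  proof (rule infsum_eq_suminf_nat, rule summable_comparison_test'[OF sb, where N = 0])
    fix z
    have "norm (c z * mmul M B z s) = \<bar>(\<Sum>y\<le>z. F z y)\<bar>"
      using row[of z] rowinf[of z] by simp
    also have "\<dots> \<le> (\<Sum>y\<le>z. \<bar>F z y\<bar>)" by (rule sum_abs)
    finally show "norm (norm (c z * mmul M B z s)) \<le> (K1 * K2) * (real (Suc z) ^ (Suc (p + q)) * \<bar>c z\<bar>)"
      using rowb[of z] by simp
  qed
  have "suminf (\<lambda>z. c z * mmul M B z s) = infsum (\<lambda>z. infsum (\<lambda>y. F z y) UNIV) UNIV"
    using lhs row by simp
  also have "\<dots> = infsum (\<lambda>y. infsum (\<lambda>z. F z y) UNIV) UNIV" by (rule swap)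
  also have "\<dots> = suminf (\<lambda>y. infsum (\<lambda>z. F z y) UNIV)"
    by (rule summable_on_suminf_nat[OF colsum, symmetric])
  also have "\<dots> = suminf (\<lambda>y. suminf (\<lambda>z. c z * M z y) * B y s)" using col by simp
  finally show ?thesis .
qed

definition QQ :: "(complex \<Rightarrow> complex) \<Rightarrow> complex \<Rightarrow> complex" where
  "QQ G = (\<lambda>z. if z = 1 then deriv G 1 else (G z - G 1) / (z - 1))"

lemma QQ_hol:
  assumes "G holomorphic_on U" "open U" "1 \<in> U"
  shows "QQ G holomorphic_on U"
  unfolding QQ_def by (rule pole_lemma[OF assms(1)]) (simp add: interior_open assms)

lemma QQ_iter_hol:
  assumes "G holomorphic_on U" "open U" "1 \<in> U"
  shows "(QQ ^^ j) G holomorphic_on U"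
  by (induction j) (auto intro: QQ_hol assms)

lemma QQ_iter_formula:
  assumes z: "z \<noteq> 1"
  shows "(QQ ^^ m) F z = (F z - (\<Sum>j<m. (QQ ^^ j) F 1 * (z - 1) ^ j)) / (z - 1) ^ m"
proof (induction m)
  case 0 thus ?case by simp
next
  case (Suc m)
  have nz: "z - 1 \<noteq> 0" using z by simp
  have "(QQ ^^ Suc m) F z = ((QQ ^^ m) F z - (QQ ^^ m) F 1) / (z - 1)"
    using z by (simp add: QQ_def)
  also have "\<dots> = (F z - (\<Sum>j<Suc m. (QQ ^^ j) F 1 * (z - 1) ^ j)) / (z - 1) ^ Suc m"
    unfolding Suc.IH using nz by (simp add: field_simps)
  finally show ?case .
qed

lemma QQ_decomp: "F z = F 1 + (z - 1) * QQ F z"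
  by (cases "z = 1") (simp_all add: QQ_def)

lemma QQ_iter_value:
  assumes "F holomorphic_on U" "open U" "1 \<in> U"
  shows "(QQ ^^ m) F 1 = (deriv ^^ m) F 1 / fact m"
  using assms
proof (induction m arbitrary: F)
  case 0 thus ?case by simp
next
  case (Suc m F)
  have hQ: "QQ F holomorphic_on U" by (rule QQ_hol[OF Suc.prems])
  have "(QQ ^^ Suc m) F 1 = (QQ ^^ m) (QQ F) 1" by (simp only: funpow_Suc_right comp_def)
  also have "\<dots> = (deriv ^^ m) (QQ F) 1 / fact m" by (rule Suc.IH[OF hQ Suc.prems(2,3)])
  finally have A: "(QQ ^^ Suc m) F 1 = (deriv ^^ m) (QQ F) 1 / fact m" .
  have B: "(deriv ^^ Suc m) F 1 = of_nat (Suc m) * (deriv ^^ m) (QQ F) 1"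
  proof -
    have eqF: "F = (\<lambda>w. F 1 + (w - 1) * QQ F w)" using QQ_decomp by blast
    have h1: "(\<lambda>w. w - 1) holomorphic_on U" by (intro holomorphic_intros)
    have h2: "(\<lambda>w. (w - 1) * QQ F w) holomorphic_on U" by (intro holomorphic_intros hQ)
    have "(deriv ^^ Suc m) F 1 = (deriv ^^ Suc m) (\<lambda>w. F 1 + (w - 1) * QQ F w) 1"
      by (subst eqF) simp
    also have "\<dots> = (deriv ^^ Suc m) (\<lambda>w. F 1) 1 + (deriv ^^ Suc m) (\<lambda>w. (w - 1) * QQ F w) 1"
      by (rule higher_deriv_add[OF _ h2 Suc.prems(2,3)]) (intro holomorphic_intros)
    also have "(deriv ^^ Suc m) (\<lambda>w. (w - 1) * QQ F w) 1 =
        (\<Sum>i = 0..Suc m. of_nat (Suc m choose i) * (deriv ^^ i) (\<lambda>w. w - 1) 1 * (deriv ^^ (Suc m - i)) (QQ F) 1)"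
      by (rule higher_deriv_mult[OF h1 hQ Suc.prems(2,3)])
    also have "\<dots> = (\<Sum>i\<in>{1}. of_nat (Suc m choose i) * (deriv ^^ i) (\<lambda>w. w - 1) 1 * (deriv ^^ (Suc m - i)) (QQ F) 1)"
    proof (rule sum.mono_neutral_right)
      show "\<forall>i\<in>{0..Suc m} - {1}. of_nat (Suc m choose i) * (deriv ^^ i) (\<lambda>w. w - 1) 1 * (deriv ^^ (Suc m - i)) (QQ F) 1 = 0"
      proof
        fix i assume i: "i \<in> {0..Suc m} - {1}"
        have hp: "(deriv ^^ i) (\<lambda>w::complex. (w - 1) ^ 1) 1 = pochhammer (of_nat (Suc 1 - i)) i * (1 - 1) ^ (1 - i)"
          by (rule higher_deriv_power)
        have "(deriv ^^ i) (\<lambda>w::complex. (w - 1) ^ 1) 1 = 0"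
        proof (cases "i = 0")
          case True thus ?thesis using hp by simp
        next
          case False
          with i have "i \<ge> 2" by auto
          hence "Suc 1 - i = 0" by simp
          thus ?thesis using hp \<open>i \<ge> 2\<close> by (simp add: pochhammer_0_left)
        qed
        thus "of_nat (Suc m choose i) * (deriv ^^ i) (\<lambda>w. w - 1) 1 * (deriv ^^ (Suc m - i)) (QQ F) 1 = 0"
          by simp
      qed
    qed auto
    also have "\<dots> = of_nat (Suc m) * (deriv ^^ m) (QQ F) 1"
    proof -
      have "(deriv ^^ 1) (\<lambda>w. (w - 1) ^ 1) 1 = pochhammer (of_nat (Suc 1 - 1)) 1 * (1 - 1) ^ (1 - 1)"
        by (rule higher_deriv_power)
      hence "(deriv ^^ 1) (\<lambda>w::complex. w - 1) 1 = 1" by simp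
      thus ?thesis by simp
    qed
    finally show ?thesis by simp
  qed
  have "(deriv ^^ Suc m) F 1 / fact (Suc m) = (of_nat (Suc m) * (deriv ^^ m) (QQ F) 1) / (of_nat (Suc m) * fact m)"
    unfolding B by (simp only: fact_Suc of_nat_mult)
  also have "\<dots> = (deriv ^^ m) (QQ F) 1 / fact m"
    by (rule mult_divide_mult_cancel_left) (simp only: of_nat_eq_0_iff nat.distinct(2) not_False_eq_True)
  finally show ?case using A by simp
qed

lemma QQ_pow_shift:
  assumes H: "H field_differentiable (at 1)"
  shows "QQ (\<lambda>z. H z * (z - 1) ^ Suc m) = (\<lambda>z. H z * (z - 1) ^ m)"
proof (rule ext)
  fix z :: complex
  show "QQ (\<lambda>z. H z * (z - 1) ^ Suc m) z = H z * (z - 1) ^ m"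
  proof (cases "z = 1")
    case True
    have dH: "(H has_field_derivative deriv H 1) (at 1)" using H by (rule field_differentiable_derivI)
    have "((\<lambda>z. H z * (z - 1) ^ Suc m) has_field_derivative
           (deriv H 1 * (1 - 1) ^ Suc m + H 1 * (of_nat (Suc m) * (1 - 1) ^ m * 1))) (at 1)"
      by (rule derivative_eq_intros dH refl)+ simp
    hence "deriv (\<lambda>z. H z * (z - 1) ^ Suc m) 1 = deriv H 1 * (1 - 1) ^ Suc m + H 1 * (of_nat (Suc m) * (1 - 1) ^ m * 1)"
      by (rule DERIV_imp_deriv)
    also have "\<dots> = H 1 * (1 - 1) ^ m" by (cases m) simp_all
    finally show ?thesis using True by (simp add: QQ_def)
  next
    case False
    hence "z - 1 \<noteq> 0" by simp
    thus ?thesis using False by (simp add: QQ_def field_simps)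
  qed
qed

lemma QQ_pow_iter:
  assumes H: "H field_differentiable (at 1)"
  shows "(QQ ^^ j) (\<lambda>z. H z * (z - 1) ^ (m + j)) = (\<lambda>z. H z * (z - 1) ^ m)"
proof (induction j)
  case 0 thus ?case by simp
next
  case (Suc j)
  have "(QQ ^^ Suc j) (\<lambda>z. H z * (z - 1) ^ (m + Suc j)) = (QQ ^^ j) (QQ (\<lambda>z. H z * (z - 1) ^ Suc (m + j)))"
    by (simp only: funpow_Suc_right comp_def add_Suc_right)
  also have "QQ (\<lambda>z. H z * (z - 1) ^ Suc (m + j)) = (\<lambda>z. H z * (z - 1) ^ (m + j))"
    by (rule QQ_pow_shift[OF H])
  finally show ?case using Suc.IH by simp
qed

lemma real_hderiv:
  fixes F :: "complex \<Rightarrow> complex" and f :: "real \<Rightarrow> real"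
  assumes hol: "F holomorphic_on U" and U: "open U" and I: "open I"
    and sub: "\<And>x. x \<in> I \<Longrightarrow> of_real x \<in> U"
    and eq: "\<And>x. x \<in> I \<Longrightarrow> F (of_real x) = of_real (f x)"
  shows "x \<in> I \<Longrightarrow> (deriv ^^ j) F (of_real x) = of_real ((deriv ^^ j) f x)"
proof (induction j arbitrary: x)
  case 0 thus ?case using eq by simp
next
  case (Suc j x)
  define D where "D = (deriv ^^ Suc j) F (of_real x)"
  have "((deriv ^^ j) F has_field_derivative D) (at (of_real x))"
    unfolding D_def by (rule has_field_derivative_higher_deriv[OF hol U sub[OF Suc.prems]])
  hence "((\<lambda>t. (deriv ^^ j) F (of_real t)) has_vector_derivative D) (at x within UNIV)"
    by (rule has_vector_derivative_real_field)
  hence "((\<lambda>t. (deriv ^^ j) F (of_real t)) has_vector_derivative D) (at x)" by simp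
  hence dv: "((\<lambda>t. of_real ((deriv ^^ j) f t)) has_vector_derivative D) (at x)"
    by (rule has_vector_derivative_transform_within_open[OF _ I Suc.prems]) (rule Suc.IH)
  have "((\<lambda>t. Re (of_real ((deriv ^^ j) f t) :: complex)) has_vector_derivative Re D) (at x)"
    by (rule bounded_linear.has_vector_derivative[OF bounded_linear_Re dv])
  hence "((deriv ^^ j) f has_real_derivative Re D) (at x)"
    by (simp add: has_real_derivative_iff_has_vector_derivative)
  hence dRe: "deriv ((deriv ^^ j) f) x = Re D" by (rule DERIV_imp_deriv)
  have "((\<lambda>t. Im (of_real ((deriv ^^ j) f t) :: complex)) has_vector_derivative Im D) (at x)"
    by (rule bounded_linear.has_vector_derivative[OF bounded_linear_Im dv])
  hence "((\<lambda>t. 0::real) has_vector_derivative Im D) (at x)" by simp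
  hence "Im D = 0" using vector_derivative_unique_at has_vector_derivative_const by metis
  hence "D = of_real (Re D)" by (simp add: complex_eq_iff)
  thus ?case using dRe by (simp add: D_def)
qed

lemma summable_poly_geom:
  fixes \<rho> :: real
  assumes "0 \<le> \<rho>" "\<rho> < 1"
  shows "summable (\<lambda>n. real (Suc n) ^ k * \<rho> ^ n)"
proof -
  define c where "c = (\<lambda>k. (diffs ^^ k) (\<lambda>_. 1::real))"
  have sm: "summable (\<lambda>n. c k n * x ^ n)" if "norm x < 1" for x :: real and k
    using that
  proof (induction k arbitrary: x)
    case 0 thus ?case by (simp add: c_def summable_geometric)
  next
    case (Suc k x)
    have "summable (\<lambda>n. diffs (c k) n * x ^ n)"
      by (rule termdiff_converges[OF Suc.prems]) (rule Suc.IH)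
    thus ?case by (simp add: c_def)
  qed
  have ge: "c k n \<ge> real (Suc n) ^ k" for n
  proof (induction k arbitrary: n)
    case 0 thus ?case by (simp add: c_def)
  next
    case (Suc k n)
    have "c (Suc k) n = real (Suc n) * c k (Suc n)" by (simp add: c_def diffs_def)
    also have "\<dots> \<ge> real (Suc n) * real (Suc (Suc n)) ^ k"
      using Suc.IH[of "Suc n"] by (intro mult_left_mono) auto
    also have "real (Suc (Suc n)) ^ k \<ge> real (Suc n) ^ k" by (intro power_mono) auto
    hence "real (Suc n) * real (Suc (Suc n)) ^ k \<ge> real (Suc n) ^ Suc k"
      by (simp add: mult_left_mono)
    finally show ?case by simp
  qed
  show ?thesis
  proof (rule summable_comparison_test'[OF sm[of \<rho> k]])
    show "norm \<rho> < 1" using assms by simp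
    fix n
    show "norm (real (Suc n) ^ k * \<rho> ^ n) \<le> c k n * \<rho> ^ n"
      using ge[of n] assms by (simp add: abs_mult mult_right_mono)
  qed
qed

definition gR :: "(complex \<Rightarrow> complex) \<Rightarrow> real \<Rightarrow> real" where
  "gR G = (\<lambda>x. Re (G (of_real x)))"

definition act :: "(nat \<Rightarrow> real) \<Rightarrow> (nat \<Rightarrow> nat \<Rightarrow> real) \<Rightarrow> nat \<Rightarrow> real" where
  "act c M = (\<lambda>y. suminf (\<lambda>z. c z * M z y))"

definition goodU :: "complex set \<Rightarrow> bool" where
  "goodU U \<longleftrightarrow> open U \<and> of_real ` {-1..1} \<subseteq> U"

lemma goodU_1: "goodU U \<Longrightarrow> 1 \<in> U"
proof -
  assume "goodU U"
  hence "\<forall>x\<in>{-1..1::real}. of_real x \<in> U" by (auto simp: goodU_def image_subset_iff)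
  from this[rule_format, of 1] show "1 \<in> U" by simp
qed

lemma cont_gR:
  assumes "G holomorphic_on U" "goodU U"
  shows "continuous_on {-1..1} (gR G)"
proof -
  have "continuous_on (of_real ` {-1..1}) G"
    using assms by (auto simp: goodU_def intro: continuous_on_subset holomorphic_on_imp_continuous_on)
  hence "continuous_on {-1..1} (\<lambda>x. G (of_real x))"
    by (rule continuous_on_compose2[OF _ continuous_on_of_real[OF continuous_on_id]]) auto
  thus ?thesis unfolding gR_def by (intro continuous_intros)
qed

lemma gR_decay:
  assumes "G holomorphic_on U" "goodU U"
  obtains C \<rho> where "0 < \<rho>" "\<rho> < 1" "\<And>s. \<bar>ch (gR G) s\<bar> \<le> C * \<rho> ^ s"
proof -
  have o: "open U" "of_real ` {-1..1} \<subseteq> U" using assms(2) by (auto simp: goodU_def)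
  obtain C \<rho> where r: "0 < \<rho>" "\<rho> < 1" "\<And>s. \<bar>ch (\<lambda>x. Re (G (of_real x))) s\<bar> \<le> C * \<rho> ^ s"
    using ch_decay[OF assms(1) o] by blast
  show ?thesis by (rule that[of \<rho> C]) (use r in \<open>simp_all add: gR_def\<close>)
qed

lemma gR_ch0:
  assumes "G holomorphic_on U" "goodU U"
  shows "ch (gR G) \<longlonglongrightarrow> 0"
proof -
  obtain C \<rho> where r: "0 < \<rho>" "\<rho> < 1" "\<And>s. \<bar>ch (gR G) s\<bar> \<le> C * \<rho> ^ s"
    using gR_decay[OF assms] by blast
  have "(\<lambda>s. C * \<rho> ^ s) \<longlonglongrightarrow> C * 0"
    by (intro tendsto_mult tendsto_const LIMSEQ_power_zero) (use r in auto)
  hence "(\<lambda>s. C * \<rho> ^ s) \<longlonglongrightarrow> 0" by simp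
  moreover have "eventually (\<lambda>s. norm (ch (gR G) s) \<le> C * \<rho> ^ s) sequentially"
    by (rule always_eventually) (use r in simp)
  ultimately show ?thesis by (rule Lim_null_comparison[rotated])
qed

lemma gR_rapid:
  assumes "G holomorphic_on U" "goodU U" "b = 1/2 \<or> b = -1/2"
  shows "rapid (Cf (gR G) b)"
proof -
  obtain C \<rho> where r: "0 < \<rho>" "\<rho> < 1" "\<And>s. \<bar>ch (gR G) s\<bar> \<le> C * \<rho> ^ s"
    using gR_decay[OF assms(1,2)] by blast
  have cg: "continuous_on {-1..1} (gR G)" by (rule cont_gR[OF assms(1,2)])
  have bd: "\<bar>Cf (gR G) b z\<bar> \<le> 2 * C * \<rho> ^ z" for z
  proof -
    have r2: "\<bar>ch (gR G) (Suc z)\<bar> \<le> C * \<rho> ^ z"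
    proof -
      have "\<bar>ch (gR G) 0\<bar> \<le> C" using r(3)[of 0] by simp
      hence C0: "C \<ge> 0" using abs_ge_zero[of "ch (gR G) 0"] by linarith
      have "\<rho> ^ Suc z \<le> \<rho> ^ z" by (rule power_decreasing) (use r in auto)
      hence "C * \<rho> ^ Suc z \<le> C * \<rho> ^ z" using C0 by (rule mult_left_mono)
      thus ?thesis using r(3)[of "Suc z"] by linarith
    qed
    show ?thesis
    proof (cases "b = 1/2")
      case True
      hence "Cf (gR G) b z = ch (gR G) z - ch (gR G) (Suc z)" by (subst True) (rule Cf_p[OF cg])
      thus ?thesis using r(3)[of z] r2 by linarith
    next
      case False
      hence b: "b = -1/2" using assms(3) by simp
      have "\<bar>Wt (-1/2) z\<bar> \<le> 2" by (simp add: Wt_def)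
      hence "\<bar>Wt (-1/2) z * ch (gR G) z\<bar> \<le> 2 * (C * \<rho> ^ z)"
        unfolding abs_mult using r(3)[of z] by (intro mult_mono) auto
      moreover have "Cf (gR G) b z = Wt (-1/2) z * ch (gR G) z" by (subst b) (rule Cf_m[OF cg])
      ultimately show ?thesis by simp
    qed
  qed
  show ?thesis unfolding rapid_def
  proof
    fix k
    have "summable (\<lambda>z. 2 * C * (real (Suc z) ^ k * \<rho> ^ z))"
      by (intro summable_mult summable_poly_geom) (use r in auto)
    thus "summable (\<lambda>z. real (Suc z) ^ k * \<bar>Cf (gR G) b z\<bar>)"
    proof (rule summable_comparison_test'[where N = 0])
      fix z
      have "real (Suc z) ^ k * \<bar>Cf (gR G) b z\<bar> \<le> real (Suc z) ^ k * (2 * C * \<rho> ^ z)"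
        using bd[of z] by (intro mult_left_mono) auto
      thus "norm (real (Suc z) ^ k * \<bar>Cf (gR G) b z\<bar>) \<le> 2 * C * (real (Suc z) ^ k * \<rho> ^ z)"
        by (simp add: mult_ac)
    qed
  qed
qed

lemma T_step:
  assumes "G holomorphic_on U" "goodU U"
  shows "(\<lambda>z. Cf (gR G) (1/2) z * Tm z s) sums Cf (gR G) (-1/2) s"
proof -
  have cg: "continuous_on {-1..1} (gR G)" by (rule cont_gR[OF assms])
  have "(\<lambda>z. (ch (gR G) z - ch (gR G) (Suc z)) * Tm z s) sums (Wt (-1/2) s * ch (gR G) s)"
    by (rule T_action[OF gR_ch0[OF assms]])
  thus ?thesis unfolding Cf_p[OF cg] Cf_m[OF cg] .
qed

lemma gR_QQ_rel:
  assumes "x \<in> {-1..1}"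
  shows "gR G x = gR G 1 + (x - 1) * gR (QQ G) x"
proof -
  have "G (of_real x) = G 1 + (of_real x - 1) * QQ G (of_real x)" by (rule QQ_decomp)
  hence "Re (G (of_real x)) = Re (G 1) + Re (of_real (x - 1) * QQ G (of_real x))" by simp
  thus ?thesis by (simp add: gR_def)
qed

lemma phi_step:
  assumes hG: "G holomorphic_on U" and gU: "goodU U"
  shows "(\<lambda>z. Cf (gR G) (-1/2) z * phim z s) sums Cf (gR (QQ G)) (1/2) s"
proof -
  have oU: "open U" using gU by (simp add: goodU_def)
  have hQ: "QQ G holomorphic_on U" by (rule QQ_hol[OF hG oU goodU_1[OF gU]])
  have cg: "continuous_on {-1..1} (gR G)" by (rule cont_gR[OF hG gU])
  have cq: "continuous_on {-1..1} (gR (QQ G))" by (rule cont_gR[OF hQ gU])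
  have rel: "2 * ch (gR G) z = ch (gR (QQ G)) (z - 1) + ch (gR (QQ G)) (Suc z) - 2 * ch (gR (QQ G)) z"
    if "1 \<le> z" for z
    by (rule ch_shift[OF cq gR_QQ_rel that])
  have "(\<lambda>z. (Wt (-1/2) z * ch (gR G) z) * phim z s) sums (ch (gR (QQ G)) s - ch (gR (QQ G)) (Suc s))"
    by (rule phi_action[OF gR_ch0[OF hQ gU] rel])
  thus ?thesis unfolding Cf_p[OF cq] Cf_m[OF cg] .
qed

lemma act_mid: "act c mid = c"
proof (rule ext)
  fix y
  have "suminf (\<lambda>z. c z * mid z y) = (\<Sum>z\<in>{y}. c z * mid z y)"
    by (rule suminf_finite) (auto simp: mid_def)
  thus "act c mid y = c y" by (simp add: act_def mid_def)
qed

lemma act_T: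
  assumes "G holomorphic_on U" "goodU U"
  shows "act (Cf (gR G) (1/2)) Tm = Cf (gR G) (-1/2)"
  by (rule ext, unfold act_def, rule sums_unique[symmetric], rule T_step[OF assms])

lemma act_phi:
  assumes "G holomorphic_on U" "goodU U"
  shows "act (Cf (gR G) (-1/2)) phim = Cf (gR (QQ G)) (1/2)"
  by (rule ext, unfold act_def, rule sums_unique[symmetric], rule phi_step[OF assms])

lemma act_assoc:
  assumes "rapid c" "lowtri M" "polyb M" "polyb B"
  shows "act c (mmul M B) = act (act c M) B"
  by (rule ext) (simp add: act_def assoc[OF assms])

lemmas lowtri_TP = lowtri_mmul[OF lowtri_Tm lowtri_phim]
lemmas lowtri_PT = lowtri_mmul[OF lowtri_phim lowtri_Tm]
lemmas polyb_TP = polyb_mmul[OF lowtri_Tm polyb_Tm polyb_phim]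
lemmas polyb_PT = polyb_mmul[OF lowtri_phim polyb_phim polyb_Tm]

lemma iter_TP:
  assumes hG: "G holomorphic_on U" and gU: "goodU U"
  shows "act (Cf (gR G) (1/2)) (mpow (mmul Tm phim) j) = Cf (gR ((QQ ^^ j) G)) (1/2)"
proof (induction j)
  case 0 thus ?case by (simp add: act_mid)
next
  case (Suc j)
  have oU: "open U" using gU by (simp add: goodU_def)
  have hj: "(QQ ^^ j) G holomorphic_on U" by (rule QQ_iter_hol[OF hG oU goodU_1[OF gU]])
  have "act (Cf (gR G) (1/2)) (mpow (mmul Tm phim) (Suc j))
      = act (act (Cf (gR G) (1/2)) (mpow (mmul Tm phim) j)) (mmul Tm phim)"
    by (simp only: mpow.simps, rule act_assoc)
       (auto intro: gR_rapid[OF hG gU] lowtri_mpow polyb_mpow lowtri_TP polyb_TP)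
  also have "\<dots> = act (Cf (gR ((QQ ^^ j) G)) (1/2)) (mmul Tm phim)" by (simp only: Suc.IH)
  also have "\<dots> = act (act (Cf (gR ((QQ ^^ j) G)) (1/2)) Tm) phim"
    by (rule act_assoc) (auto intro: gR_rapid[OF hj gU] lowtri_Tm polyb_Tm polyb_phim)
  also have "\<dots> = Cf (gR ((QQ ^^ Suc j) G)) (1/2)"
    by (simp only: act_T[OF hj gU] act_phi[OF hj gU] funpow.simps o_apply)
  finally show ?case .
qed

lemma iter_PT:
  assumes hG: "G holomorphic_on U" and gU: "goodU U"
  shows "act (Cf (gR G) (-1/2)) (mpow (mmul phim Tm) j) = Cf (gR ((QQ ^^ j) G)) (-1/2)"
proof (induction j)
  case 0 thus ?case by (simp add: act_mid)
next
  case (Suc j)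
  have oU: "open U" using gU by (simp add: goodU_def)
  have hj: "(QQ ^^ j) G holomorphic_on U" by (rule QQ_iter_hol[OF hG oU goodU_1[OF gU]])
  have hj': "QQ ((QQ ^^ j) G) holomorphic_on U" by (rule QQ_hol[OF hj oU goodU_1[OF gU]])
  have "act (Cf (gR G) (-1/2)) (mpow (mmul phim Tm) (Suc j))
      = act (act (Cf (gR G) (-1/2)) (mpow (mmul phim Tm) j)) (mmul phim Tm)"
    by (simp only: mpow.simps, rule act_assoc)
       (auto intro: gR_rapid[OF hG gU] lowtri_mpow polyb_mpow lowtri_PT polyb_PT)
  also have "\<dots> = act (Cf (gR ((QQ ^^ j) G)) (-1/2)) (mmul phim Tm)" by (simp only: Suc.IH)
  also have "\<dots> = act (act (Cf (gR ((QQ ^^ j) G)) (-1/2)) phim) Tm"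
    by (rule act_assoc) (auto intro: gR_rapid[OF hj gU] lowtri_phim polyb_phim polyb_Tm)
  also have "\<dots> = Cf (gR ((QQ ^^ Suc j) G)) (-1/2)"
    by (simp only: act_phi[OF hj gU] act_T[OF hj' gU] funpow.simps o_apply)
  finally show ?case .
qed

lemma Psi_act: "\<not> (n1 = N \<and> a1 = a) \<Longrightarrow> (\<And>z. PsiTop E N a l z = c z) \<Longrightarrow>
    Psi E N a n1 a1 l s = act c (phiLev n1 a1 N a) s"
  unfolding Psi_def act_def by (simp only: if_False)

lemma pl1: "phiLev n1 (-1/2) N (1/2) = mmul (mpow (mmul Tm phim) (N - n1)) Tm" by (simp add: phiLev_def)
lemma pl2: "phiLev n1 (1/2) N (1/2) = mpow (mmul Tm phim) (N - n1)" by (simp add: phiLev_def)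
lemma pl3: "phiLev n1 (1/2) N (-1/2) = mmul (mpow (mmul phim Tm) (N - n1 - 1)) phim" by (simp add: phiLev_def)
lemma pl4: "phiLev n1 (-1/2) N (-1/2) = mpow (mmul phim Tm) (N - n1)" by (simp add: phiLev_def)

lemma Psi_formula:
  assumes hG: "G0 holomorphic_on U" and gU: "goodU U"
    and top: "\<And>z. PsiTop E N a l z = Cf (gR G0) a z"
    and a: "a = 1/2 \<or> a = -1/2" and lev: "is_level n1 a1"
    and ord: "2 * real n1 + a1 \<le> 2 * real N + a"
  shows "Psi E N a n1 a1 l s = Cf (gR ((QQ ^^ (N - n1)) G0)) a1 s"
proof -
  have oU: "open U" using gU by (simp add: goodU_def)
  have a1: "a1 = 1/2 \<or> a1 = -1/2" using lev by (simp add: is_level_def)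
  have hGk: "(QQ ^^ j) G0 holomorphic_on U" for j by (rule QQ_iter_hol[OF hG oU goodU_1[OF gU]])
  show ?thesis
  proof (cases "n1 = N \<and> a1 = a")
    case True
    thus ?thesis by (simp add: Psi_def top)
  next
    case False
    have P: "Psi E N a n1 a1 l s = act (Cf (gR G0) a) (phiLev n1 a1 N a) s"
      by (rule Psi_act[OF False top])
    consider "a1 = -1/2" "a = 1/2" | "a1 = 1/2" "a = 1/2" | "a1 = 1/2" "a = -1/2" | "a1 = -1/2" "a = -1/2"
      using a a1 by blast
    thus ?thesis
    proof cases
      case 1
      have "act (Cf (gR G0) a) (phiLev n1 a1 N a) = act (Cf (gR G0) (1/2)) (mmul (mpow (mmul Tm phim) (N - n1)) Tm)"
        unfolding 1 pl1 ..
      also have "\<dots> = act (act (Cf (gR G0) (1/2)) (mpow (mmul Tm phim) (N - n1))) Tm"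
        by (rule act_assoc) (auto intro: gR_rapid[OF hG gU] lowtri_mpow polyb_mpow lowtri_TP polyb_TP polyb_Tm)
      also have "\<dots> = act (Cf (gR ((QQ ^^ (N - n1)) G0)) (1/2)) Tm" by (simp only: iter_TP[OF hG gU])
      also have "\<dots> = Cf (gR ((QQ ^^ (N - n1)) G0)) (-1/2)" by (rule act_T[OF hGk gU])
      finally show ?thesis using P unfolding 1 by simp
    next
      case 2
      have "act (Cf (gR G0) a) (phiLev n1 a1 N a) = act (Cf (gR G0) (1/2)) (mpow (mmul Tm phim) (N - n1))"
        unfolding 2 pl2 ..
      also have "\<dots> = Cf (gR ((QQ ^^ (N - n1)) G0)) (1/2)" by (rule iter_TP[OF hG gU])
      finally show ?thesis using P unfolding 2 by simp
    next
      case 3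
      have "n1 < N" using ord 3 by simp
      hence k: "Suc (N - n1 - 1) = N - n1" by simp
      have "act (Cf (gR G0) a) (phiLev n1 a1 N a) = act (Cf (gR G0) (-1/2)) (mmul (mpow (mmul phim Tm) (N - n1 - 1)) phim)"
        unfolding 3 pl3 ..
      also have "\<dots> = act (act (Cf (gR G0) (-1/2)) (mpow (mmul phim Tm) (N - n1 - 1))) phim"
        by (rule act_assoc) (auto intro: gR_rapid[OF hG gU] lowtri_mpow polyb_mpow lowtri_PT polyb_PT polyb_phim)
      also have "\<dots> = act (Cf (gR ((QQ ^^ (N - n1 - 1)) G0)) (-1/2)) phim" by (simp only: iter_PT[OF hG gU])
      also have "\<dots> = Cf (gR (QQ ((QQ ^^ (N - n1 - 1)) G0))) (1/2)" by (rule act_phi[OF hGk gU])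
      also have "QQ ((QQ ^^ (N - n1 - 1)) G0) = (QQ ^^ (N - n1)) G0"
        by (subst k[symmetric]) (simp only: funpow.simps o_apply)
      finally show ?thesis using P unfolding 3 by simp
    next
      case 4
      have "act (Cf (gR G0) a) (phiLev n1 a1 N a) = act (Cf (gR G0) (-1/2)) (mpow (mmul phim Tm) (N - n1))"
        unfolding 4 pl4 ..
      also have "\<dots> = Cf (gR ((QQ ^^ (N - n1)) G0)) (-1/2)" by (rule iter_PT[OF hG gU])
      finally show ?thesis using P unfolding 4 by simp
    qed
  qed
qed

lemma div_minus_one: "(D::complex) \<noteq> 0 \<Longrightarrow> X / D - 1 = (X - D) / D"
  by (simp add: diff_divide_distrib)

lemma factor_bound:
  fixes w :: complex and a b A \<epsilon> :: real
  assumes a: "0 \<le> a" "a \<le> A" and b: "0 \<le> b" "b \<le> 1"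
    and w: "Re w \<ge> - 2 * \<epsilon>" "norm w \<le> 3" and e: "0 \<le> \<epsilon>" "2 * \<epsilon> * (A + A\<^sup>2 / 2) \<le> 1/4"
  shows "norm (1 + of_real a * w + of_real (a\<^sup>2) * w / 2) \<ge> 3/4"
    and "norm ((1 - of_real b * w + of_real (b\<^sup>2) * w / 2) / (1 + of_real a * w + of_real (a\<^sup>2) * w / 2) - 1)
           \<le> 4 * (b + a * (1 + A / 2))"
proof -
  define c where "c = a + a\<^sup>2 / 2"
  have c0: "0 \<le> c" using a by (simp add: c_def)
  have cA: "c \<le> A + A\<^sup>2 / 2" unfolding c_def using a by (intro add_mono power_mono divide_right_mono) auto
  have den: "1 + of_real a * w + of_real (a\<^sup>2) * w / 2 = 1 + of_real c * w" by (simp add: c_def algebra_simps)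
  have "c * Re w \<ge> - (2 * \<epsilon>) * c" using mult_left_mono[OF w(1) c0] by (simp add: mult.commute)
  moreover have "2 * \<epsilon> * c \<le> 1/4"
    using mult_left_mono[OF cA, of "2 * \<epsilon>"] e by linarith
  ultimately have Rd: "Re (1 + of_real c * w) \<ge> 3/4" by simp
  have nd: "norm (1 + of_real c * w) \<ge> 3/4" using Rd complex_Re_le_cmod order_trans by blast
  thus "norm (1 + of_real a * w + of_real (a\<^sup>2) * w / 2) \<ge> 3/4" unfolding den .
  have nz: "1 + of_real c * w \<noteq> 0" using nd by auto
  define d where "d = b - b\<^sup>2 / 2 + c"
  have d0: "0 \<le> d" and dle: "d \<le> b + a * (1 + A / 2)"
  proof -
    have "b\<^sup>2 \<le> b" using b by (simp add: power2_eq_square mult_left_le_one_le)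
    hence "b - b\<^sup>2 / 2 \<ge> 0" using b by linarith
    thus "0 \<le> d" using c0 by (simp add: d_def)
    have "a\<^sup>2 \<le> a * A" using a by (simp add: power2_eq_square mult_left_mono)
    hence "c \<le> a * (1 + A / 2)" by (simp add: c_def algebra_simps)
    moreover have "b\<^sup>2 \<ge> 0" by simp
    ultimately show "d \<le> b + a * (1 + A / 2)" unfolding d_def by linarith
  qed
  have "(1 - of_real b * w + of_real (b\<^sup>2) * w / 2) / (1 + of_real c * w) - 1
      = - (of_real d * w) / (1 + of_real c * w)"
  proof -
    have "(1 - of_real b * w + of_real (b\<^sup>2) * w / 2) / (1 + of_real c * w) - 1
        = ((1 - of_real b * w + of_real (b\<^sup>2) * w / 2) - (1 + of_real c * w)) / (1 + of_real c * w)"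
      by (rule div_minus_one[OF nz])
    moreover have "(1 - of_real b * w + of_real (b\<^sup>2) * w / 2) - (1 + of_real c * w) = - (of_real d * w)"
      by (simp add: d_def algebra_simps)
    ultimately show ?thesis by simp
  qed
  hence "norm ((1 - of_real b * w + of_real (b\<^sup>2) * w / 2) / (1 + of_real c * w) - 1)
      = d * norm w / norm (1 + of_real c * w)"
    using d0 by (simp add: norm_divide norm_mult)
  also have "\<dots> \<le> d * 3 / (3/4)"
    using nd w(2) d0 by (intro frac_le mult_left_mono) auto
  also have "\<dots> \<le> 4 * (b + a * (1 + A / 2))" using dle by simp
  finally show "norm ((1 - of_real b * w + of_real (b\<^sup>2) * w / 2) / (1 + of_real a * w + of_real (a\<^sup>2) * w / 2) - 1)
           \<le> 4 * (b + a * (1 + A / 2))" unfolding den .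
qed

lemma decr_le0: "(\<And>i. g (Suc i) \<le> g i) \<Longrightarrow> (g i :: real) \<le> g 0"
  by (induction i) (auto intro: order_trans)

definition fcx :: "(nat \<Rightarrow> real) \<Rightarrow> (nat \<Rightarrow> real) \<Rightarrow> nat \<Rightarrow> complex \<Rightarrow> complex" where
  "fcx \<alpha> \<beta> i z = (1 - of_real (\<beta> i) * (1 - z) + of_real ((\<beta> i)\<^sup>2) * (1 - z) / 2)
                  / (1 + of_real (\<alpha> i) * (1 - z) + of_real ((\<alpha> i)\<^sup>2) * (1 - z) / 2)"

lemma fcx_real: "fcx \<alpha> \<beta> i (of_real x) = of_real ((1 - \<beta> i * (1 - x) + (\<beta> i)\<^sup>2 * (1 - x) / 2)
             / (1 + \<alpha> i * (1 - x) + (\<alpha> i)\<^sup>2 * (1 - x) / 2))"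
  by (simp add: fcx_def)

lemma open_rect: "open {z::complex. a < Re z \<and> Re z < b \<and> \<bar>Im z\<bar> < e}"
proof -
  have "{z::complex. a < Re z \<and> Re z < b \<and> \<bar>Im z\<bar> < e} = Re -` {a<..<b} \<inter> Im -` {-e<..<e}"
    by auto
  moreover have "open (Re -` {a<..<b} \<inter> Im -` {-e<..<e})"
    by (intro open_Int open_vimage) (auto intro: continuous_intros)
  ultimately show ?thesis by simp
qed

lemma E_ext:
  assumes om: "in_Omega \<alpha> \<beta> \<delta>" and b0: "\<beta> 0 < 1"
  obtains U F \<epsilon> where "goodU U" "F holomorphic_on U" "\<epsilon> > 0"
    "\<And>x. x \<in> {-1-\<epsilon><..<1+\<epsilon>} \<Longrightarrow> of_real x \<in> U \<and> F (of_real x) = of_real (Eomega \<alpha> \<beta> \<delta> x)"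
proof -
  have adec: "\<And>i. \<alpha> (Suc i) \<le> \<alpha> i" and apos: "\<And>i. 0 \<le> \<alpha> i"
    and bdec: "\<And>i. \<beta> (Suc i) \<le> \<beta> i" and bpos: "\<And>i. 0 \<le> \<beta> i"
    and sm: "summable (\<lambda>i. \<alpha> i + \<beta> i)"
    using om by (auto simp: in_Omega_def)
  define A where "A = \<alpha> 0"
  have aA: "\<alpha> i \<le> A" for i unfolding A_def by (rule decr_le0[of \<alpha>, OF adec])
  have b1: "\<beta> i \<le> 1" for i using decr_le0[of \<beta> i, OF bdec] b0 by simp
  have A0: "A \<ge> 0" using apos by (simp add: A_def)
  define \<epsilon> where "\<epsilon> = 1 / (8 * (1 + A + A\<^sup>2))"
  have pos: "1 + A + A\<^sup>2 > 0" using A0 by (simp add: add_pos_nonneg)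
  have e0: "\<epsilon> > 0" using pos by (simp add: \<epsilon>_def)
  have e8: "\<epsilon> \<le> 1/8"
  proof -
    have "1 \<le> 1 + A + A\<^sup>2" using A0 by simp
    thus ?thesis unfolding \<epsilon>_def by (simp add: field_simps)
  qed
  have eA: "2 * \<epsilon> * (A + A\<^sup>2 / 2) \<le> 1/4"
  proof -
    have "A + A\<^sup>2 / 2 \<le> 1 + A + A\<^sup>2" using A0 by simp
    hence "(A + A\<^sup>2 / 2) / (1 + A + A\<^sup>2) \<le> 1" using pos by (simp add: divide_le_eq)
    thus ?thesis unfolding \<epsilon>_def using pos by (simp add: field_simps)
  qed
  define K0 where "K0 = 4 + 2 * A"
  define M where "M = (\<lambda>i. K0 * (\<alpha> i + \<beta> i))"
  have smM: "summable M" unfolding M_def by (intro summable_mult sm)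
  define R2 where "R2 = {z::complex. -1 - 2 * \<epsilon> \<le> Re z \<and> Re z \<le> 1 + 2 * \<epsilon> \<and> \<bar>Im z\<bar> \<le> 2 * \<epsilon>}"
  have bnd: "norm (1 + of_real (\<alpha> i) * (1 - z) + of_real ((\<alpha> i)\<^sup>2) * (1 - z) / 2) \<ge> 3/4"
        "norm (fcx \<alpha> \<beta> i z - 1) \<le> M i" if z: "z \<in> R2" for z i
  proof -
    have w1: "Re (1 - z) \<ge> - 2 * \<epsilon>" using z by (simp add: R2_def)
    have "norm (1 - z) \<le> \<bar>Re (1 - z)\<bar> + \<bar>Im (1 - z)\<bar>" by (rule cmod_le)
    also have "\<dots> \<le> (2 + 2 * \<epsilon>) + 2 * \<epsilon>"
    proof (rule add_mono)
      show "\<bar>Re (1 - z)\<bar> \<le> 2 + 2 * \<epsilon>" using z e0 unfolding R2_def abs_le_iff by simp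
      show "\<bar>Im (1 - z)\<bar> \<le> 2 * \<epsilon>" using z unfolding R2_def by simp
    qed
    also have "\<dots> \<le> 3" using e8 by simp
    finally have w2: "norm (1 - z) \<le> 3" .
    note fb = factor_bound[OF apos[of i] aA[of i] bpos[of i] b1[of i] w1 w2 less_imp_le[OF e0] eA]
    show "norm (1 + of_real (\<alpha> i) * (1 - z) + of_real ((\<alpha> i)\<^sup>2) * (1 - z) / 2) \<ge> 3/4" by (rule fb(1))
    have "4 * (\<beta> i + \<alpha> i * (1 + A / 2)) \<le> M i"
      unfolding M_def K0_def using apos[of i] bpos[of i] A0 by (simp add: algebra_simps)
    thus "norm (fcx \<alpha> \<beta> i z - 1) \<le> M i" using fb(2) unfolding fcx_def by linarith
  qed
  have dnz: "1 + of_real (\<alpha> i) * (1 - z) + of_real ((\<alpha> i)\<^sup>2) * (1 - z) / 2 \<noteq> 0" if "z \<in> R2" for z i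
    using bnd(1)[OF that, of i] by auto
  define U where "U = {z::complex. -1 - \<epsilon> < Re z \<and> Re z < 1 + \<epsilon> \<and> \<bar>Im z\<bar> < \<epsilon>}"
  have oU: "open U" unfolding U_def by (rule open_rect)
  have UR: "U \<subseteq> R2" using e0 by (auto simp: U_def R2_def)
  have cbR: "cball z0 \<epsilon> \<subseteq> R2" if "z0 \<in> U" for z0
  proof
    fix z assume "z \<in> cball z0 \<epsilon>"
    hence d: "norm (z - z0) \<le> \<epsilon>" by (simp add: dist_norm norm_minus_commute)
    have "\<bar>Re (z - z0)\<bar> \<le> \<epsilon>" "\<bar>Im (z - z0)\<bar> \<le> \<epsilon>"
      using d abs_Re_le_cmod abs_Im_le_cmod order_trans by blast+
    thus "z \<in> R2" using that by (auto simp: U_def R2_def abs_le_iff)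
  qed
  define P where "P = (\<lambda>z. lim (\<lambda>n. \<Prod>i<n. fcx \<alpha> \<beta> i z))"
  have holfcx: "fcx \<alpha> \<beta> i holomorphic_on S" if "S \<subseteq> R2" for S i
    unfolding fcx_def using dnz that by (intro holomorphic_intros) auto
  have ulim: "uniform_limit (cball z0 \<epsilon>) (\<lambda>n z. \<Prod>i<n. fcx \<alpha> \<beta> i z) P sequentially" if "z0 \<in> U" for z0
  proof -
    have "uniformly_convergent_on (cball z0 \<epsilon>) (\<lambda>n z. \<Prod>i<n. fcx \<alpha> \<beta> i z)"
    proof (rule uniformly_convergent_on_prod')
      show "continuous_on (cball z0 \<epsilon>) (fcx \<alpha> \<beta> i)" for i
        by (rule holomorphic_on_imp_continuous_on, rule holfcx, rule cbR[OF that])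
      show "compact (cball z0 \<epsilon>)" by simp
      show "uniformly_convergent_on (cball z0 \<epsilon>) (\<lambda>N z. \<Sum>n<N. norm (fcx \<alpha> \<beta> n z - 1))"
        by (rule Weierstrass_m_test'[OF _ smM]) (use bnd(2) cbR[OF that] in auto)
    qed
    thus ?thesis unfolding P_def uniformly_convergent_uniform_limit_iff .
  qed
  have holP: "P holomorphic_on U"
  proof -
    have "P field_differentiable (at z0)" if z0: "z0 \<in> U" for z0
    proof -
      obtain "continuous_on (cball z0 \<epsilon>) P" "P holomorphic_on ball z0 \<epsilon>"
      proof (rule holomorphic_uniform_limit[OF _ ulim[OF z0]])
        show "\<forall>\<^sub>F n in sequentially. continuous_on (cball z0 \<epsilon>) (\<lambda>z. \<Prod>i<n. fcx \<alpha> \<beta> i z) \<and>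
              (\<lambda>z. \<Prod>i<n. fcx \<alpha> \<beta> i z) holomorphic_on ball z0 \<epsilon>"
        proof (rule always_eventually, rule allI, rule conjI)
          fix n
          have h: "(\<lambda>z. \<Prod>i<n. fcx \<alpha> \<beta> i z) holomorphic_on cball z0 \<epsilon>"
            by (intro holomorphic_on_prod holfcx cbR[OF z0])
          thus "continuous_on (cball z0 \<epsilon>) (\<lambda>z. \<Prod>i<n. fcx \<alpha> \<beta> i z)"
            by (rule holomorphic_on_imp_continuous_on)
          show "(\<lambda>z. \<Prod>i<n. fcx \<alpha> \<beta> i z) holomorphic_on ball z0 \<epsilon>"
            by (rule holomorphic_on_subset[OF h]) auto
        qed
      qed simp
      thus ?thesis using e0 by (intro holomorphic_on_imp_differentiable_at[of P "ball z0 \<epsilon>"]) auto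
    qed
    thus ?thesis using oU by (simp add: holomorphic_on_open field_differentiable_def has_field_derivative_def)
  qed
  define \<gamma> where "\<gamma> = \<delta> - (\<Sum>i. \<alpha> i + \<beta> i)"
  define F where "F = (\<lambda>z. exp (of_real \<gamma> * (z - 1)) * P z)"
  have holF: "F holomorphic_on U" unfolding F_def by (intro holomorphic_intros holP)
  have gU: "goodU U" unfolding goodU_def using oU e0 by (auto simp: U_def)
  show ?thesis
  proof (rule that[OF gU holF e0])
    fix x assume x: "x \<in> {-1-\<epsilon><..<1+\<epsilon>}"
    have xU: "of_real x \<in> U" using x e0 by (auto simp: U_def)
    define fr where "fr = (\<lambda>i. (1 - \<beta> i * (1 - x) + (\<beta> i)\<^sup>2 * (1 - x) / 2)
             / (1 + \<alpha> i * (1 - x) + (\<alpha> i)\<^sup>2 * (1 - x) / 2))"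
    have fr_eq: "fcx \<alpha> \<beta> i (of_real x) = of_real (fr i)" for i by (simp add: fr_def fcx_real)
    have "summable (\<lambda>i. norm (fr i - 1))"
    proof (rule summable_comparison_test'[OF smM])
      fix i
      have "norm (fcx \<alpha> \<beta> i (of_real x) - 1) \<le> M i" by (rule bnd(2)) (use xU UR in auto)
      moreover have "fcx \<alpha> \<beta> i (of_real x) - 1 = of_real (fr i - 1)" by (simp add: fr_eq)
      ultimately show "norm (norm (fr i - 1)) \<le> M i" by (simp only: norm_of_real) simp
    qed
    hence "convergent_prod fr" by (intro abs_convergent_prod_imp_convergent_prod summable_imp_abs_convergent_prod)
    hence "(\<lambda>n. \<Prod>i\<le>n. fr i) \<longlonglongrightarrow> prodinf fr" by (rule convergent_prod_LIMSEQ)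
    hence "(\<lambda>n. \<Prod>i<n. fr i) \<longlonglongrightarrow> prodinf fr" by (subst LIMSEQ_lessThan_iff_atMost)
    hence "(\<lambda>n. of_real (\<Prod>i<n. fr i) :: complex) \<longlonglongrightarrow> of_real (prodinf fr)" by (rule tendsto_of_real)
    hence "(\<lambda>n. \<Prod>i<n. fcx \<alpha> \<beta> i (of_real x)) \<longlonglongrightarrow> of_real (prodinf fr)" by (simp add: fr_eq)
    hence Pv: "P (of_real x) = of_real (prodinf fr)" unfolding P_def by (rule limI)
    have "Eomega \<alpha> \<beta> \<delta> x = exp (\<gamma> * (x - 1)) * prodinf fr"
      by (simp add: Eomega_def \<gamma>_def fr_def Let_def)
    moreover have e: "exp (of_real \<gamma> * (of_real x - 1)) = (of_real (exp (\<gamma> * (x - 1))) :: complex)"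
      by (subst exp_of_real[symmetric]) simp
    ultimately have "of_real (Eomega \<alpha> \<beta> \<delta> x) = F (of_real x)"
      by (simp only: F_def Pv e of_real_mult)
    thus "of_real x \<in> U \<and> F (of_real x) = of_real (Eomega \<alpha> \<beta> \<delta> x)" using xU by simp
  qed
qed

lemma level_le:
  assumes a: "a = 1/2 \<or> a = -1/2" and lev: "is_level n1 a1"
    and ord: "2 * real n1 + a1 \<le> 2 * real N + a"
  shows "n1 \<le> N"
proof -
  have "a1 = 1/2 \<or> a1 = -1/2" using lev by (simp add: is_level_def)
  hence "2 * real n1 \<le> 2 * real N + 1" using a ord by auto
  thus ?thesis by linarith
qed

theorem theorem4p4:
  fixes \<alpha> \<beta> :: "nat \<Rightarrow> real" and \<delta> :: real and N :: nat and a :: real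
    and n1 :: nat and a1 :: real
  assumes "in_Omega \<alpha> \<beta> \<delta>"
    and "\<beta> 0 < 1"
    and "N \<ge> 1" and "a = 1/2 \<or> a = -1/2"
    and "is_level n1 a1"
    and "2 * real n1 + a1 \<le> 2 * real N + a"
  shows "(\<forall>l s. 1 \<le> l \<and> l \<le> n1 \<longrightarrow>
            Psi (Eomega \<alpha> \<beta> \<delta>) N a n1 a1 l s =
              Wt a1 s / pi *
              integral {-1..1} (\<lambda>x. Eomega \<alpha> \<beta> \<delta> x * Jac a1 s x * (x - 1) ^ (n1 - l)
                                      * (1 - x) powr a1 * (1 + x) powr (-1/2)))
       \<and> (\<forall>l s. n1 < l \<and> l \<le> N \<longrightarrow>
            Psi (Eomega \<alpha> \<beta> \<delta>) N a n1 a1 l s =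
              Wt a1 s / pi *
              integral {-1..1} (\<lambda>x.
                 (Eomega \<alpha> \<beta> \<delta> x
                   - (\<Sum>j<l - n1. (deriv ^^ j) (Eomega \<alpha> \<beta> \<delta>) 1 / fact j * (x - 1) ^ j))
                 / (x - 1) ^ (l - n1)
                 * Jac a1 s x * (1 - x) powr a1 * (1 + x) powr (-1/2)))"
proof -
  note om = assms(1) and b0 = assms(2) and aa = assms(4) and lev = assms(5) and ord = assms(6)
  define E where "E = Eomega \<alpha> \<beta> \<delta>"
  obtain U FE \<epsilon> where gU: "goodU U" and holF: "FE holomorphic_on U" and e0: "\<epsilon> > 0"
    and FEr: "\<And>x. x \<in> {-1-\<epsilon><..<1+\<epsilon>} \<Longrightarrow> of_real x \<in> U \<and> FE (of_real x) = of_real (E x)"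
    using E_ext[OF om b0] unfolding E_def by blast
  have oU: "open U" using gU by (simp add: goodU_def)
  have U1: "1 \<in> U" by (rule goodU_1[OF gU])
  have dF: "FE field_differentiable (at 1)" by (rule holomorphic_on_imp_differentiable_at[OF holF oU U1])
  have nN: "n1 \<le> N" by (rule level_le[OF aa lev ord])
  have FEx: "FE (of_real x) = of_real (E x)" if "x \<in> {-1..1}" for x
    using FEr[of x] that e0 by auto
  have PsiG: "Psi E N a n1 a1 l s = Cf (gR ((QQ ^^ (N - n1)) (\<lambda>z. FE z * (z - 1) ^ (N - l)))) a1 s" for l s
  proof (rule Psi_formula[OF _ gU _ aa lev ord])
    show "(\<lambda>z. FE z * (z - 1) ^ (N - l)) holomorphic_on U" by (intro holomorphic_intros holF)
    fix z
    show "PsiTop E N a l z = Cf (gR (\<lambda>z. FE z * (z - 1) ^ (N - l))) a z"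
      unfolding PsiTop_def Cf_def
    proof (intro arg_cong[where f = "\<lambda>t. Wt a z / pi * t"] integral_cong)
      fix x :: real assume x: "x \<in> {-1..1}"
      have "gR (\<lambda>z. FE z * (z - 1) ^ (N - l)) x = E x * (x - 1) ^ (N - l)"
        using FEx[OF x] by (simp add: gR_def)
      thus "E x * Jac a z x * (x - 1) ^ (N - l) * (1 - x) powr a * (1 + x) powr (- 1 / 2) =
            gR (\<lambda>z. FE z * (z - 1) ^ (N - l)) x * Jac a z x * (1 - x) powr a * (1 + x) powr (- 1 / 2)"
        by (simp add: mult_ac)
    qed
  qed
  show ?thesis
  proof (intro conjI allI impI)
    fix l s assume l: "1 \<le> l \<and> l \<le> n1"
    have "(QQ ^^ (N - n1)) (\<lambda>z. FE z * (z - 1) ^ (N - l)) = (QQ ^^ (N - n1)) (\<lambda>z. FE z * (z - 1) ^ ((n1 - l) + (N - n1)))"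
      using l nN by (simp add: algebra_simps)
    also have "\<dots> = (\<lambda>z. FE z * (z - 1) ^ (n1 - l))" by (rule QQ_pow_iter[OF dF])
    finally have Q: "(QQ ^^ (N - n1)) (\<lambda>z. FE z * (z - 1) ^ (N - l)) = (\<lambda>z. FE z * (z - 1) ^ (n1 - l))" .
    have "Psi E N a n1 a1 l s = Cf (gR (\<lambda>z. FE z * (z - 1) ^ (n1 - l))) a1 s" using PsiG Q by simp
    also have "\<dots> = Wt a1 s / pi *
              integral {-1..1} (\<lambda>x. E x * Jac a1 s x * (x - 1) ^ (n1 - l)
                                      * (1 - x) powr a1 * (1 + x) powr (-1/2))"
      unfolding Cf_def
    proof (intro arg_cong[where f = "\<lambda>t. Wt a1 s / pi * t"] integral_cong)
      fix x :: real assume x: "x \<in> {-1..1}"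
      have "gR (\<lambda>z. FE z * (z - 1) ^ (n1 - l)) x = E x * (x - 1) ^ (n1 - l)"
        using FEx[OF x] by (simp add: gR_def)
      thus "gR (\<lambda>z. FE z * (z - 1) ^ (n1 - l)) x * Jac a1 s x * (1 - x) powr a1 * (1 + x) powr (- 1 / 2) =
            E x * Jac a1 s x * (x - 1) ^ (n1 - l) * (1 - x) powr a1 * (1 + x) powr (- 1 / 2)"
        by (simp add: mult_ac)
    qed
    finally show "Psi (Eomega \<alpha> \<beta> \<delta>) N a n1 a1 l s =
              Wt a1 s / pi *
              integral {-1..1} (\<lambda>x. Eomega \<alpha> \<beta> \<delta> x * Jac a1 s x * (x - 1) ^ (n1 - l)
                                      * (1 - x) powr a1 * (1 + x) powr (-1/2))"
      unfolding E_def .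
  next
    fix l s assume l: "n1 < l \<and> l \<le> N"
    define m where "m = l - n1"
    have "(QQ ^^ (N - n1)) (\<lambda>z. FE z * (z - 1) ^ (N - l)) = (QQ ^^ m) ((QQ ^^ (N - l)) (\<lambda>z. FE z * (z - 1) ^ (0 + (N - l))))"
    proof -
      have k: "N - n1 = m + (N - l)" using l by (simp add: m_def)
      show ?thesis unfolding k funpow_add o_apply by simp
    qed
    also have "(QQ ^^ (N - l)) (\<lambda>z. FE z * (z - 1) ^ (0 + (N - l))) = (\<lambda>z. FE z * (z - 1) ^ 0)"
      by (rule QQ_pow_iter[OF dF])
    also have "(\<lambda>z. FE z * (z - 1) ^ 0) = FE" by simp
    finally have Q: "(QQ ^^ (N - n1)) (\<lambda>z. FE z * (z - 1) ^ (N - l)) = (QQ ^^ m) FE" .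
    define I where "I = {-1-\<epsilon><..<1+\<epsilon>}"
    have dj: "(deriv ^^ j) FE 1 = of_real ((deriv ^^ j) E 1)" for j
    proof -
      have "(deriv ^^ j) FE (of_real 1) = of_real ((deriv ^^ j) E 1)"
        by (rule real_hderiv[OF holF oU, of I]) (use FEr e0 in \<open>auto simp: I_def\<close>)
      thus ?thesis by simp
    qed
    have val: "(QQ ^^ j) FE 1 = of_real ((deriv ^^ j) E 1 / fact j)" for j
      using QQ_iter_value[OF holF oU U1, of j] dj by simp
    have "Psi E N a n1 a1 l s = Cf (gR ((QQ ^^ m) FE)) a1 s" using PsiG Q by simp
    also have "\<dots> = Wt a1 s / pi *
              integral {-1..1} (\<lambda>x.
                 (E x - (\<Sum>j<l - n1. (deriv ^^ j) E 1 / fact j * (x - 1) ^ j))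
                 / (x - 1) ^ (l - n1)
                 * Jac a1 s x * (1 - x) powr a1 * (1 + x) powr (-1/2))"
      unfolding Cf_def
    proof (intro arg_cong[where f = "\<lambda>t. Wt a1 s / pi * t"] integral_spike[of "{1}"])
      show "negligible {1::real}" by simp
      fix x :: real assume x: "x \<in> {-1..1} - {1}"
      have x1: "(of_real x :: complex) \<noteq> 1" using x by auto
      have "(QQ ^^ m) FE (of_real x) = (FE (of_real x) - (\<Sum>j<m. (QQ ^^ j) FE 1 * (of_real x - 1) ^ j)) / (of_real x - 1) ^ m"
        by (rule QQ_iter_formula[OF x1])
      also have "\<dots> = of_real ((E x - (\<Sum>j<m. (deriv ^^ j) E 1 / fact j * (x - 1) ^ j)) / (x - 1) ^ m)"
        using FEx[of x] x by (simp add: val)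
      finally have "(QQ ^^ m) FE (of_real x) = of_real ((E x - (\<Sum>j<m. (deriv ^^ j) E 1 / fact j * (x - 1) ^ j)) / (x - 1) ^ m)" .
      hence "gR ((QQ ^^ m) FE) x = (E x - (\<Sum>j<m. (deriv ^^ j) E 1 / fact j * (x - 1) ^ j)) / (x - 1) ^ m"
        by (simp only: gR_def Re_complex_of_real)
      thus "(E x - (\<Sum>j<l - n1. (deriv ^^ j) E 1 / fact j * (x - 1) ^ j)) / (x - 1) ^ (l - n1)
                 * Jac a1 s x * (1 - x) powr a1 * (1 + x) powr (-1/2) =
            gR ((QQ ^^ m) FE) x * Jac a1 s x * (1 - x) powr a1 * (1 + x) powr (- 1 / 2)"
        by (simp add: m_def)
    qed
    finally show "Psi (Eomega \<alpha> \<beta> \<delta>) N a n1 a1 l s =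
              Wt a1 s / pi *
              integral {-1..1} (\<lambda>x.
                 (Eomega \<alpha> \<beta> \<delta> x
                   - (\<Sum>j<l - n1. (deriv ^^ j) (Eomega \<alpha> \<beta> \<delta>) 1 / fact j * (x - 1) ^ j))
                 / (x - 1) ^ (l - n1)
                 * Jac a1 s x * (1 - x) powr a1 * (1 + x) powr (-1/2))"
      unfolding E_def .
  qed
qed

end
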